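(* Assume $f$ is in Case 2. Then, for every sufficiently small $r>0$, $A_f^l=A_0\setminus E_z$ holds for every $l>0$ if $\delta\le d$, and for every $0<l<\alpha$ if $\delta>d$ and $(n_1,m_1)\neq(0,\delta)$.
   Context: Let $f(z,w)=(p(z),q(z,w))$ be a holomorphic skew product defined on $\mathbb{C}^2$ or on $\{|z|<R\}\times\mathbb{C}$, where $R$ is so large that the attracting basin $A_p$ of $p$ at $0$ is relatively compact in $\{|z|<R\}$. Assume $p(z)=az^{\delta}+O(z^{\delta+1})$, $a\neq0$, $\delta\ge2$, and $q(z,w)=\sum_{i,j\ge0}b_{ij}z^iw^j$ with $b_{00}=b_{01}=0$. The Newton polygon $N(q)$ is the convex hull of $\bigcup_{b_{ij}\ne0}\{(x,y):x\ge i,\ y\ge j\}$, with vertices $(n_1,m_1),\dots,(n_s,m_s)$, $n_1<\dots<n_s$, $m_1>\dots>m_s$, $s>1$; $T_{s-1}$ is the $y$-intercept of the line through $(n_{s-1},m_{s-1})$ and $(n_s,m_s)$. Case 2 means $\delta\le T_{s-1}$; set $(\gamma,d)=(n_s,m_s)$ and, when $\delta\ne d$, $\alpha=\gamma/(\delta-d)$. For $l>0$ let $U^l=\{|z|<r,\ |w|<r|z|^l\}$ and $A_f^l=\bigcup_{n\ge0}f^{-n}(U^l)$. $A_0$ is the attracting basin of the origin for $f$, and $E_z=\bigcup_{n\ge0}f^{-n}(\{z=0\})$. *)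

theory Defs
  imports "HOL-Analysis.Analysis" "HOL-Library.Landau_Symbols"
begin

text \<open>Newton polygon of q(z,w) = sum b i j z^i w^j: convex hull of the union of
  the quadrants {x >= i, y >= j} over all (i,j) with b i j nonzero.\<close>
definition newton_polygon :: "(nat \<Rightarrow> nat \<Rightarrow> complex) \<Rightarrow> (real \<times> real) set" where
  "newton_polygon b = convex hull (\<Union> {{(x, y). real i \<le> x \<and> real j \<le> y} | i j. b i j \<noteq> 0})"

definition newton_vertices :: "(nat \<Rightarrow> nat \<Rightarrow> complex) \<Rightarrow> (real \<times> real) set" where
  "newton_vertices b = {v. v extreme_point_of newton_polygon b}"

definition skew :: "(complex \<Rightarrow> complex) \<Rightarrow> (complex \<Rightarrow> complex \<Rightarrow> complex)
    \<Rightarrow> complex \<times> complex \<Rightarrow> complex \<times> complex" where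
  "skew p q = (\<lambda>(z, w). (p z, q z w))"

definition preimage_iter :: "('a \<Rightarrow> 'a) \<Rightarrow> 'a set \<Rightarrow> nat \<Rightarrow> 'a set \<Rightarrow> 'a set" where
  "preimage_iter F Dom n U = {x. (\<forall>k<n. (F ^^ k) x \<in> Dom) \<and> (F ^^ n) x \<in> U}"

definition backward_orbit :: "('a \<Rightarrow> 'a) \<Rightarrow> 'a set \<Rightarrow> 'a set \<Rightarrow> 'a set" where
  "backward_orbit F Dom U = (\<Union>n. preimage_iter F Dom n U)"

definition basin :: "('a::topological_space \<Rightarrow> 'a) \<Rightarrow> 'a set \<Rightarrow> 'a \<Rightarrow> 'a set" where
  "basin F Dom c = {x. (\<forall>n. (F ^^ n) x \<in> Dom) \<and> (\<lambda>n. (F ^^ n) x) \<longlonglongrightarrow> c}"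

definition Uset :: "real \<Rightarrow> real \<Rightarrow> (complex \<times> complex) set" where
  "Uset r l = {(z, w). norm z < r \<and> norm w < r * norm z powr l}"

end

theory Submission
  imports Defs
begin


lemma np_quad:
  assumes "b i j \<noteq> 0" "real i \<le> x" "real j \<le> y"
  shows "(x, y) \<in> newton_polygon b"
  unfolding newton_polygon_def
  by (rule hull_subset[THEN subsetD]) (use assms in blast)

lemma np_half:
  assumes u: "0 \<le> u" and v: "0 \<le> v"
    and S: "\<And>i j. b i j \<noteq> 0 \<Longrightarrow> c \<le> u * real i + v * real j"
    and P: "(x, y) \<in> newton_polygon b"
  shows "c \<le> u * x + v * y"
proof -
  have "newton_polygon b \<subseteq> {p. c \<le> (u, v) \<bullet> p}"
    unfolding newton_polygon_def
  proof (rule hull_minimal)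
    show "convex {p. c \<le> (u, v) \<bullet> p}" by (rule convex_halfspace_ge)
    show "\<Union> {{(x, y). real i \<le> x \<and> real j \<le> y} | i j. b i j \<noteq> 0} \<subseteq> {p. c \<le> (u, v) \<bullet> p}"
    proof clarify
      fix x y i j assume h: "b i j \<noteq> 0" "real i \<le> x" "real j \<le> y"
      have "c \<le> u * real i + v * real j" using S h(1) .
      also have "\<dots> \<le> u * x + v * y" using h u v by (intro add_mono mult_left_mono) auto
      finally show "c \<le> (u, v) \<bullet> (x, y)" by simp
    qed
  qed
  with P show ?thesis by auto
qed

lemma np_up:
  assumes P: "(x, y) \<in> newton_polygon b" and "x \<le> x'" "y \<le> y'"
  shows "(x', y') \<in> newton_polygon b"
proof -
  let ?N = "newton_polygon b"
  define P' where "P' = {p. \<forall>dx dy. 0 \<le> dx \<longrightarrow> 0 \<le> dy \<longrightarrow> p + (dx, dy) \<in> ?N}"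
  have cN: "convex ?N" unfolding newton_polygon_def by (rule convex_convex_hull)
  have "?N \<subseteq> P'"
    unfolding newton_polygon_def
  proof (rule hull_minimal)
    show "convex P'"
      unfolding convex_def P'_def
    proof clarify
      fix p1 p2 :: "real \<times> real" and s t dx dy :: real
      assume h1: "\<forall>dx dy. 0 \<le> dx \<longrightarrow> 0 \<le> dy \<longrightarrow> p1 + (dx, dy) \<in> ?N"
        and h2: "\<forall>dx dy. 0 \<le> dx \<longrightarrow> 0 \<le> dy \<longrightarrow> p2 + (dx, dy) \<in> ?N"
        and st: "0 \<le> s" "0 \<le> t" "s + t = 1" and d: "0 \<le> dx" "0 \<le> dy"
      have "s *\<^sub>R (p1 + (dx, dy)) + t *\<^sub>R (p2 + (dx, dy)) \<in> ?N"
        using cN h1 h2 st d by (intro convexD) auto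
      moreover have "s *\<^sub>R (p1 + (dx, dy)) + t *\<^sub>R (p2 + (dx, dy)) = s *\<^sub>R p1 + t *\<^sub>R p2 + (dx, dy)"
      proof -
        have "dx * s + dx * t = dx" "dy * s + dy * t = dy" by (metis distrib_left mult_1_right st(3))+
        then show ?thesis by (simp add: algebra_simps)
      qed
      ultimately show "s *\<^sub>R p1 + t *\<^sub>R p2 + (dx, dy) \<in> ?N" by simp
    qed
    show "\<Union> {{(x, y). real i \<le> x \<and> real j \<le> y} | i j. b i j \<noteq> 0} \<subseteq> P'"
      unfolding P'_def by clarsimp (erule np_quad; simp)
  qed
  with P have "(x, y) \<in> P'" by auto
  then have H: "\<forall>dx dy. 0 \<le> dx \<longrightarrow> 0 \<le> dy \<longrightarrow> (x, y) + (dx, dy) \<in> ?N" unfolding P'_def by simp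
  have "(x, y) + (x' - x, y' - y) \<in> ?N" using H assms(2,3) diff_ge_0_iff_ge by blast
  then show ?thesis by simp
qed

lemma mid_not_ext:
  assumes "(x1, y1) \<in> S" "(x2, y2) \<in> S" "(x1, y1) \<noteq> (x2, y2)"
    and "x = (x1 + x2) / 2" "y = (y1 + y2) / 2"
  shows "\<not> (x, y) extreme_point_of (S :: (real \<times> real) set)"
proof -
  have "midpoint (x1, y1) (x2, y2) = (x, y)" using assms by (simp add: midpoint_def)
  moreover have "midpoint (x1, y1) (x2, y2) \<in> open_segment (x1, y1) (x2, y2)"
    using assms(3) by simp
  ultimately show ?thesis using assms(1,2) unfolding extreme_point_of_def by metis
qed

lemma corner:
  fixes S :: "(real \<times> real) set"
  assumes pS: "(px, py) \<in> S"
    and h1: "\<And>x y. (x, y) \<in> S \<Longrightarrow> ua * px + va * py \<le> ua * x + va * y"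
    and h2: "\<And>x y. (x, y) \<in> S \<Longrightarrow> ub * px + vb * py \<le> ub * x + vb * y"
    and det: "ua * vb - ub * va \<noteq> 0"
  shows "(px, py) extreme_point_of S"
proof -
  have key: "(x, y) = (px, py)" if a: "(x, y) \<in> S" and c: "(x', y') \<in> S"
      and t: "0 < t" "t < 1" and e: "(px, py) = (1 - t) *\<^sub>R (x, y) + t *\<^sub>R (x', y')" for x y x' y' t
  proof -
    have ex: "px = (1 - t) * x + t * x'" and ey: "py = (1 - t) * y + t * y'" using e by auto
    have A1: "ua * px + va * py \<le> ua * x + va * y" using h1 a .
    have B1: "ua * px + va * py \<le> ua * x' + va * y'" using h1 c .
    have A2: "ub * px + vb * py \<le> ub * x + vb * y" using h2 a .
    have B2: "ub * px + vb * py \<le> ub * x' + vb * y'" using h2 c .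
    have s1: "(1 - t) * (ua * x + va * y - (ua * px + va * py)) + t * (ua * x' + va * y' - (ua * px + va * py)) = 0"
      unfolding ex ey by (simp add: algebra_simps)
    have s2: "(1 - t) * (ub * x + vb * y - (ub * px + vb * py)) + t * (ub * x' + vb * y' - (ub * px + vb * py)) = 0"
      unfolding ex ey by (simp add: algebra_simps)
    have "(1 - t) * (ua * x + va * y - (ua * px + va * py)) = 0"
      using s1 A1 B1 t by (smt (verit) mult_nonneg_nonneg)
    then have "ua * x + va * y - (ua * px + va * py) = 0" using t by simp
    then have q1: "ua * (x - px) + va * (y - py) = 0" by (simp add: algebra_simps)
    have "(1 - t) * (ub * x + vb * y - (ub * px + vb * py)) = 0"
      using s2 A2 B2 t by (smt (verit) mult_nonneg_nonneg)
    then have "ub * x + vb * y - (ub * px + vb * py) = 0" using t by simp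
    then have q2: "ub * (x - px) + vb * (y - py) = 0" by (simp add: algebra_simps)
    have "(ua * vb - ub * va) * (x - px) = vb * (ua * (x - px) + va * (y - py)) - va * (ub * (x - px) + vb * (y - py))"
      by (simp add: algebra_simps)
    then have "(ua * vb - ub * va) * (x - px) = 0" using q1 q2 by simp
    then have xx: "x = px" using det by simp
    have "(ua * vb - ub * va) * (y - py) = ua * (ub * (x - px) + vb * (y - py)) - ub * (ua * (x - px) + va * (y - py))"
      by (simp add: algebra_simps)
    then have "(ua * vb - ub * va) * (y - py) = 0" using q1 q2 by simp
    then have "y = py" using det by simp
    with xx show ?thesis by simp
  qed
  show ?thesis
    unfolding extreme_point_of_def
  proof (intro conjI ballI pS notI)
    fix a c assume a: "a \<in> S" and c: "c \<in> S" and o: "(px, py) \<in> open_segment a c"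
    obtain x y x' y' where ac: "a = (x, y)" "c = (x', y')" by (cases a, cases c) auto
    from o obtain t where ne: "a \<noteq> c" and t: "0 < t" "t < 1" and e: "(px, py) = (1 - t) *\<^sub>R a + t *\<^sub>R c"
      unfolding in_segment by blast
    have "(x, y) = (px, py)" using key[of x y x' y' t] a c t e ac by simp
    moreover have "(x', y') = (px, py)"
    proof -
      have "(px, py) = (1 - (1 - t)) *\<^sub>R (x', y') + (1 - t) *\<^sub>R (x, y)" using e ac by (simp add: algebra_simps)
      then show ?thesis using key[of x' y' x y "1 - t"] a c t ac by simp
    qed
    ultimately show False using ne ac by simp
  qed
qed



lemma np_convex: "convex (newton_polygon b)"
  unfolding newton_polygon_def by (rule convex_convex_hull)

lemma vertex_gap:
  assumes b0: "b i0 j0 \<noteq> 0" and B: "B > 0" and A: "A \<ge> 0" and g: "g > 0"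
    and lb: "\<And>i j. b i j \<noteq> 0 \<Longrightarrow> m \<le> A * real i + B * real j"
    and eq: "A * real i0 + B * real j0 = m"
    and mi: "\<And>i j. b i j \<noteq> 0 \<Longrightarrow> A * real i + B * real j = m \<Longrightarrow> i0 \<le> i"
    and gap: "\<And>i j. b i j \<noteq> 0 \<Longrightarrow> m < A * real i + B * real j \<Longrightarrow> m + g \<le> A * real i + B * real j"
  shows "(real i0, real j0) extreme_point_of newton_polygon b"
proof -
  define K where "K = (real i0 + 1) / g"
  have K: "K \<ge> 0" unfolding K_def using g by simp
  have Kg: "K * g = real i0 + 1" unfolding K_def using g by simp
  show ?thesis
  proof (rule corner[where ua = A and va = B and ub = "1 + K * A" and vb = "K * B"])
    show "(real i0, real j0) \<in> newton_polygon b" using b0 by (rule np_quad) auto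
    fix x y assume xy: "(x, y) \<in> newton_polygon b"
    show "A * real i0 + B * real j0 \<le> A * x + B * y"
      by (rule np_half[OF A _ _ xy]) (use B lb eq in auto)
    show "(1 + K * A) * real i0 + K * B * real j0 \<le> (1 + K * A) * x + K * B * y"
    proof (rule np_half[OF _ _ _ xy])
      show "0 \<le> 1 + K * A" using K A by simp
      show "0 \<le> K * B" using K B by simp
      fix i j assume bij: "b i j \<noteq> 0"
      have e1: "(1 + K * A) * real i0 + K * B * real j0 = real i0 + K * m"
      proof -
        have "(1 + K * A) * real i0 + K * B * real j0 = real i0 + K * (A * real i0 + B * real j0)"
          by (simp add: algebra_simps)
        then show ?thesis using eq by simp
      qed
      have e2: "(1 + K * A) * real i + K * B * real j = real i + K * (A * real i + B * real j)"
        by (simp add: algebra_simps)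
      show "(1 + K * A) * real i0 + K * B * real j0 \<le> (1 + K * A) * real i + K * B * real j"
      proof (cases "A * real i + B * real j = m")
        case True
        then show ?thesis using e1 e2 mi[OF bij] by simp
      next
        case False
        then have "m + g \<le> A * real i + B * real j" using lb[OF bij] gap[OF bij] by simp
        then have "K * (m + g) \<le> K * (A * real i + B * real j)" using K by (rule mult_left_mono)
        then show ?thesis using e1 e2 Kg by (simp add: algebra_simps)
      qed
    qed
  next
    show "A * (K * B) - (1 + K * A) * B \<noteq> 0" using B by (simp add: algebra_simps)
  qed
qed

lemma vertex_minj:
  assumes "b i0 j0 \<noteq> 0"
  shows "\<exists>i1 j1. b i1 j1 \<noteq> 0 \<and> (\<forall>i j. b i j \<noteq> 0 \<longrightarrow> j1 \<le> j)
           \<and> (real i1, real j1) extreme_point_of newton_polygon b"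
proof -
  define j1 where "j1 = (LEAST j. \<exists>i. b i j \<noteq> 0)"
  have ex1: "\<exists>i. b i j1 \<noteq> 0" unfolding j1_def by (rule LeastI_ex) (use assms in blast)
  have min1: "j1 \<le> j" if "b i j \<noteq> 0" for i j unfolding j1_def by (rule Least_le) (use that in blast)
  define i1 where "i1 = (LEAST i. b i j1 \<noteq> 0)"
  have b1: "b i1 j1 \<noteq> 0" unfolding i1_def by (rule LeastI_ex) (use ex1 in blast)
  have min2: "i1 \<le> i" if "b i j1 \<noteq> 0" for i unfolding i1_def by (rule Least_le) (use that in blast)
  have "(real i1, real j1) extreme_point_of newton_polygon b"
  proof (rule vertex_gap[where A = 0 and B = 1 and g = 1 and m = "real j1"])
    show "b i1 j1 \<noteq> 0" by (rule b1)
    fix i j assume bij: "b i j \<noteq> 0"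
    show "real j1 \<le> 0 * real i + 1 * real j" using min1[OF bij] by simp
    show "0 * real i + 1 * real j = real j1 \<Longrightarrow> i1 \<le> i" using min2 bij by simp
    show "real j1 < 0 * real i + 1 * real j \<Longrightarrow> real j1 + 1 \<le> 0 * real i + 1 * real j" by simp
  qed auto
  then show ?thesis using b1 min1 by blast
qed

lemma vertex_psi:
  assumes b0: "b i0 j0 \<noteq> 0" and A: "A > 0" and B: "B > 0"
  shows "\<exists>i1 j1. b i1 j1 \<noteq> 0 \<and> A * real i1 + B * real j1 \<le> A * real i0 + B * real j0
           \<and> (real i1, real j1) extreme_point_of newton_polygon b"
proof -
  define \<psi> where "\<psi> = (\<lambda>(i::nat, j::nat). A * real i + B * real j)"
  define c0 where "c0 = A * real i0 + B * real j0 + 1"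
  define F where "F = {(i, j). b i j \<noteq> 0 \<and> \<psi> (i, j) \<le> c0}"
  define N where "N = nat \<lceil>c0 / A + c0 / B\<rceil>"
  have "F \<subseteq> {..N} \<times> {..N}"
  proof clarify
    fix i j assume "(i, j) \<in> F"
    then have h: "A * real i + B * real j \<le> c0" unfolding F_def \<psi>_def by simp
    have "A * real i \<le> c0" "B * real j \<le> c0" using h A B by (smt (verit) mult_nonneg_nonneg of_nat_0_le_iff)+
    then have "real i \<le> c0 / A" "real j \<le> c0 / B" using A B by (simp_all add: field_simps)
    moreover have "0 \<le> c0 / A" "0 \<le> c0 / B" using \<open>A * real i \<le> c0\<close> \<open>B * real j \<le> c0\<close> A B
      by (smt (verit) divide_nonneg_pos mult_nonneg_nonneg of_nat_0_le_iff)+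
    ultimately have "real i \<le> real N" "real j \<le> real N" unfolding N_def by linarith+
    then show "i \<in> {..N} \<and> j \<in> {..N}" by simp
  qed
  then have finF: "finite F" by (rule finite_subset) simp
  have i0F: "(i0, j0) \<in> F" using b0 unfolding F_def c0_def \<psi>_def by simp
  define m where "m = Min (\<psi> ` F)"
  have mle: "m \<le> \<psi> s" if "s \<in> F" for s unfolding m_def using finF that by simp
  have min_in: "m \<in> \<psi> ` F" unfolding m_def using finF i0F by (intro Min_in) auto
  then obtain s0 where s0: "s0 \<in> F" "\<psi> s0 = m" by auto
  have mc0: "m \<le> c0 - 1" using mle[OF i0F] unfolding c0_def \<psi>_def by simp
  have lb: "m \<le> \<psi> (i, j)" if "b i j \<noteq> 0" for i j
  proof (cases "(i, j) \<in> F")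
    case True then show ?thesis by (rule mle)
  next
    case False then have "\<psi> (i, j) > c0" using that unfolding F_def by auto
    then show ?thesis using mc0 by simp
  qed
  define T where "T = {i. \<exists>j. (i, j) \<in> F \<and> \<psi> (i, j) = m}"
  have "T \<noteq> {}" using s0 unfolding T_def by (cases s0) auto
  define i1 where "i1 = (LEAST i. i \<in> T)"
  have "i1 \<in> T" unfolding i1_def using \<open>T \<noteq> {}\<close> by (metis LeastI_ex equals0I)
  then obtain j1 where j1: "(i1, j1) \<in> F" "\<psi> (i1, j1) = m" unfolding T_def by auto
  have mi: "i1 \<le> i" if "b i j \<noteq> 0" "\<psi> (i, j) = m" for i j
  proof -
    have "(i, j) \<in> F" using that mc0 unfolding F_def by auto
    then have "i \<in> T" using that unfolding T_def by auto
    then show ?thesis unfolding i1_def by (rule Least_le)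
  qed
  define G where "G = (\<lambda>v. v - m) ` {v \<in> \<psi> ` F. m < v}"
  have finG: "finite G" unfolding G_def using finF by simp
  define g where "g = Min (insert 1 G)"
  have gpos: "g > 0" unfolding g_def using finG by (subst Min_gr_iff) (auto simp: G_def)
  have g1: "g \<le> 1" unfolding g_def using finG by simp
  have gap: "m + g \<le> \<psi> (i, j)" if "b i j \<noteq> 0" "m < \<psi> (i, j)" for i j
  proof (cases "(i, j) \<in> F")
    case True
    then have "\<psi> (i, j) - m \<in> G" unfolding G_def using that by auto
    then have "g \<le> \<psi> (i, j) - m" unfolding g_def using finG by simp
    then show ?thesis by simp
  next
    case False then have "\<psi> (i, j) > c0" using that unfolding F_def by auto
    then show ?thesis using mc0 g1 by simp
  qed
  have b1: "b i1 j1 \<noteq> 0" using j1 unfolding F_def by auto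
  have "(real i1, real j1) extreme_point_of newton_polygon b"
    by (rule vertex_gap[where A = A and B = B and g = g and m = m])
       (use b1 B A gpos lb mi gap j1 in \<open>auto simp: \<psi>_def\<close>)
  moreover have "A * real i1 + B * real j1 \<le> A * real i0 + B * real j0"
    using j1(2) mle[OF i0F] unfolding \<psi>_def by simp
  ultimately show ?thesis using b1 by blast
qed



lemma vert_in: "v \<in> newton_vertices b \<Longrightarrow> v \<in> newton_polygon b"
  unfolding newton_vertices_def extreme_point_of_def by auto

lemma newton_facts:
  assumes vs1: "(ns1, ms1) \<in> newton_vertices b"
    and vs: "(ns, ms) \<in> newton_vertices b"
    and two: "ns1 < ns"
    and last: "\<forall>v\<in>newton_vertices b. fst v \<le> ns"
    and second_last: "\<forall>v\<in>newton_vertices b - {(ns, ms)}. fst v \<le> ns1"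
  shows "(\<forall>i j. b i j \<noteq> 0 \<longrightarrow> ms \<le> real j) \<and> ms < ms1 \<and> 0 \<le> ns1
     \<and> (\<forall>i j. b i j \<noteq> 0 \<longrightarrow> (ms1 - ms) * ns + (ns - ns1) * ms \<le> (ms1 - ms) * real i + (ns - ns1) * real j)"
proof -
  let ?N = "newton_polygon b"
  have vsN: "(ns, ms) \<in> ?N" using vert_in[OF vs] .
  have vs1N: "(ns1, ms1) \<in> ?N" using vert_in[OF vs1] .
  have vsE: "(ns, ms) extreme_point_of ?N" using vs unfolding newton_vertices_def by simp
  have vs1E: "(ns1, ms1) extreme_point_of ?N" using vs1 unfolding newton_vertices_def by simp
  have nonneg_x: "0 \<le> x" if "(x, y) \<in> ?N" for x y
    using np_half[where u = 1 and v = 0 and c = 0, OF _ _ _ that] by simp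
  have "\<exists>i j. b i j \<noteq> 0"
  proof (rule ccontr)
    assume "\<not> (\<exists>i j. b i j \<noteq> 0)"
    then have "{{(x, y). real i \<le> x \<and> real j \<le> y} | i j. b i j \<noteq> 0} = {}" by simp
    then have "?N = {}" unfolding newton_polygon_def by simp
    with vsN show False by simp
  qed
  then obtain i0 j0 where "b i0 j0 \<noteq> 0" by blast
  from vertex_minj[of b i0 j0, OF this] obtain i2 j2 where
    bs: "b i2 j2 \<noteq> 0" and jmin: "\<forall>i j. b i j \<noteq> 0 \<longrightarrow> j2 \<le> j"
    and ext: "(real i2, real j2) extreme_point_of ?N" by blast
  have "real i2 \<le> ns" using last ext unfolding newton_vertices_def by auto
  have msge: "real j2 \<le> ms"
    using np_half[where u = 0 and v = 1 and c = "real j2", OF _ _ _ vsN] jmin by simp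
  have G1: "ms \<le> real j2"
  proof (rule ccontr)
    assume "\<not> ms \<le> real j2"
    then have lt: "real j2 < ms" by simp
    have "(ns, real j2) \<in> ?N" by (rule np_quad[of b i2 j2, OF bs]) (use \<open>real i2 \<le> ns\<close> in auto)
    moreover have "(ns, 2 * ms - real j2) \<in> ?N" by (rule np_quad[of b i2 j2, OF bs]) (use \<open>real i2 \<le> ns\<close> lt in auto)
    ultimately have "\<not> (ns, ms) extreme_point_of ?N"
      by (rule mid_not_ext) (use lt in auto)
    with vsE show False by simp
  qed
  have G1': "\<forall>i j. b i j \<noteq> 0 \<longrightarrow> ms \<le> real j"
  proof (intro allI impI)
    fix i j assume "b i j \<noteq> 0"
    then have "j2 \<le> j" using jmin by blast
    then have "real j2 \<le> real j" by simp
    then show "ms \<le> real j" using G1 by linarith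
  qed
  have ms1ge: "ms \<le> ms1"
    using np_half[where u = 0 and v = 1 and c = ms, OF _ _ _ vs1N] G1' by simp
  have Apos: "ms < ms1"
  proof (rule ccontr)
    assume "\<not> ms < ms1"
    then have eq: "ms1 = ms" using ms1ge by simp
    have "(2 * ns - ns1, ms) \<in> ?N" using vs1N eq two by (intro np_up[OF vs1N]) auto
    then have "\<not> (ns, ms) extreme_point_of ?N"
      by (intro mid_not_ext[OF vs1N[unfolded eq]]) (use two in auto)
    with vsE show False by simp
  qed
  have ns1pos: "0 \<le> ns1" using nonneg_x[OF vs1N] .
  define A where "A = ms1 - ms"
  define B where "B = ns - ns1"
  have A: "A > 0" and B: "B > 0" using Apos two unfolding A_def B_def by simp_all
  define c where "c = A * ns + B * ms"
  have c1: "c = A * ns1 + B * ms1" unfolding c_def A_def B_def by (simp add: algebra_simps)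
  have G2: "c \<le> A * real i + B * real j" if bij: "b i j \<noteq> 0" for i j
  proof (rule ccontr)
    assume "\<not> c \<le> A * real i + B * real j"
    then have lt: "A * real i + B * real j < c" by simp
    from vertex_psi[of b i j, OF bij A B] obtain i1 j1 where b1: "b i1 j1 \<noteq> 0"
      and le: "A * real i1 + B * real j1 \<le> A * real i + B * real j"
      and e1: "(real i1, real j1) extreme_point_of ?N" by blast
    have lt1: "A * real i1 + B * real j1 < c" using le lt by simp
    have "(real i1, real j1) \<noteq> (ns, ms)" using lt1 unfolding c_def by auto
    then have "(real i1, real j1) \<in> newton_vertices b - {(ns, ms)}" using e1 unfolding newton_vertices_def by simp
    from bspec[OF second_last this] have i1le: "real i1 \<le> ns1" by simp
    define t where "t = (ns1 - real i1) / (ns - real i1)"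
    have den: "ns - real i1 > 0" using i1le two by simp
    have t0: "0 \<le> t" and t1: "t < 1" unfolding t_def using den i1le two by (simp_all add: field_simps)
    define yq where "yq = (1 - t) * real j1 + t * ms"
    have tt: "t * (ns - real i1) = ns1 - real i1" unfolding t_def using den by simp
    have xq: "(1 - t) * real i1 + t * ns = ns1"
    proof -
      have "(1 - t) * real i1 + t * ns = real i1 + t * (ns - real i1)" by (simp add: algebra_simps)
      then show ?thesis using tt by simp
    qed
    have "(1 - t) *\<^sub>R (real i1, real j1) + t *\<^sub>R (ns, ms) \<in> ?N"
      using np_convex e1 vsN t0 t1 unfolding extreme_point_of_def by (intro convexD) auto
    then have qN: "(ns1, yq) \<in> ?N" using xq unfolding yq_def by simp
    have "A * ns1 + B * yq = (1 - t) * (A * real i1 + B * real j1) + t * c"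
      unfolding yq_def c_def xq[symmetric] by (simp add: algebra_simps)
    also have "\<dots> < (1 - t) * c + t * c" using lt1 t1 by simp
    also have "\<dots> = c" by (simp add: algebra_simps)
    finally have "B * yq < B * ms1" using c1 by simp
    then have yq: "yq < ms1" using B by simp
    have "(ns1, 2 * ms1 - yq) \<in> ?N" using qN yq by (intro np_up[OF qN]) auto
    then have "\<not> (ns1, ms1) extreme_point_of ?N"
      by (intro mid_not_ext[OF qN]) (use yq in auto)
    with vs1E show False by simp
  qed
  show ?thesis using G1' Apos ns1pos G2 unfolding A_def B_def c_def by auto
qed



lemma no_0delta:
  assumes G2: "\<forall>i j. b i j \<noteq> 0 \<longrightarrow> (ms1 - ms) * ns + (ns - ns1) * ms \<le> (ms1 - ms) * real i + (ns - ns1) * real j"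
    and Apos: "ms < ms1" and ns1pos: "0 \<le> ns1"
    and v1: "(n1, m1) \<in> newton_vertices b"
    and vs1: "(ns1, ms1) \<in> newton_vertices b"
    and vs: "(ns, ms) \<in> newton_vertices b"
    and two: "ns1 < ns"
    and first: "\<forall>v\<in>newton_vertices b. n1 \<le> fst v"
    and case2: "real \<delta> \<le> ms1 + ns1 * (ms1 - ms) / (ns - ns1)"
    and b0: "b 0 \<delta> \<noteq> 0"
  shows "(n1, m1) = (0, real \<delta>)"
proof -
  let ?N = "newton_polygon b"
  define A where "A = ms1 - ms"
  define B where "B = ns - ns1"
  have A: "A > 0" and B: "B > 0" using Apos two unfolding A_def B_def by simp_all
  define c where "c = A * ns + B * ms"
  have G2': "c \<le> A * real i + B * real j" if "b i j \<noteq> 0" for i j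
    using G2 that unfolding A_def B_def c_def by blast
  have cd1: "c \<le> B * real \<delta>" using G2'[OF b0] by simp
  have "real \<delta> * B \<le> (ms1 + ns1 * A / B) * B" using case2 B unfolding A_def B_def
    by (intro mult_right_mono) auto
  then have "B * real \<delta> \<le> B * ms1 + ns1 * A" using B by (simp add: algebra_simps)
  moreover have "B * ms1 + ns1 * A = c" unfolding c_def A_def B_def by (simp add: algebra_simps)
  ultimately have cdelta: "c = B * real \<delta>" using cd1 by simp
  have v1N: "(n1, m1) \<in> ?N" using vert_in[OF v1] .
  have v1E: "(n1, m1) extreme_point_of ?N" using v1 unfolding newton_vertices_def by simp
  have vsN: "(ns, ms) \<in> ?N" using vert_in[OF vs] .
  have d0N: "(0, real \<delta>) \<in> ?N" by (rule np_quad[of b 0 \<delta>, OF b0]) auto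
  have n1ge: "0 \<le> n1" using np_half[where u = 1 and v = 0 and c = 0, OF _ _ _ v1N] by simp
  have n1le: "n1 \<le> ns1" using first vs1 by force
  have nspos: "ns > 0" using ns1pos two by simp
  define t where "t = n1 / ns"
  have t0: "0 \<le> t" and t1: "t < 1" unfolding t_def using n1ge n1le two nspos by (simp_all add: field_simps)
  have tn: "t * ns = n1" unfolding t_def using nspos by simp
  define yq where "yq = (1 - t) * real \<delta> + t * ms"
  have "(1 - t) *\<^sub>R (0, real \<delta>) + t *\<^sub>R (ns, ms) \<in> ?N"
    using np_convex d0N vsN t0 t1 by (intro convexD) auto
  then have qN: "(n1, yq) \<in> ?N" using tn unfolding yq_def by (simp add: mult.commute)
  have psi_v1: "c \<le> A * n1 + B * m1"
    using np_half[where u = A and v = B and c = c, OF _ _ _ v1N] A B G2' by simp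
  have psi_q: "A * n1 + B * yq = c"
  proof -
    have "A * n1 + B * yq = (1 - t) * (B * real \<delta>) + t * (A * ns + B * ms)"
      unfolding yq_def tn[symmetric] by (simp add: algebra_simps)
    also have "\<dots> = c" using cdelta unfolding c_def[symmetric] by (simp add: algebra_simps)
    finally show ?thesis .
  qed
  have "B * yq \<le> B * m1" using psi_v1 psi_q by simp
  then have m1ge: "yq \<le> m1" using B by simp
  have m1eq: "m1 = yq"
  proof (rule ccontr)
    assume "m1 \<noteq> yq"
    then have lt: "yq < m1" using m1ge by simp
    have "(n1, 2 * m1 - yq) \<in> ?N" by (rule np_up[OF qN]) (use lt in auto)
    then have "\<not> (n1, m1) extreme_point_of ?N"
      by (intro mid_not_ext[OF qN]) (use lt in auto)
    with v1E show False by simp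
  qed
  have t_zero: "t = 0"
  proof (rule ccontr)
    assume "t \<noteq> 0"
    then have tp: "0 < t" using t0 by simp
    have ne: "(0, real \<delta>) \<noteq> (ns, ms)" using nspos by simp
    have "(n1, m1) = (1 - t) *\<^sub>R (0, real \<delta>) + t *\<^sub>R (ns, ms)"
      using tn m1eq unfolding yq_def by (simp add: mult.commute)
    then have "(n1, m1) \<in> open_segment (0, real \<delta>) (ns, ms)"
      unfolding in_segment using ne tp t1 by blast
    then show False using v1E d0N vsN unfolding extreme_point_of_def by blast
  qed
  have "n1 = 0" using tn t_zero by simp
  moreover have "m1 = real \<delta>" using m1eq t_zero unfolding yq_def by simp
  ultimately show ?thesis by simp
qed

lemma cond_le:
  assumes G1: "\<forall>i j. b i j \<noteq> 0 \<longrightarrow> ms \<le> real j"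
    and G2: "\<forall>i j. b i j \<noteq> 0 \<longrightarrow> (ms1 - ms) * ns + (ns - ns1) * ms \<le> (ms1 - ms) * real i + (ns - ns1) * real j"
    and Apos: "ms < ms1" and ns1pos: "0 \<le> ns1" and two: "ns1 < ns"
    and dle: "real \<delta> \<le> ms" and l: "0 < l"
  shows "\<exists>l'>l. \<exists>\<kappa>>0. \<forall>i j. b i j \<noteq> 0 \<longrightarrow> \<kappa> * l' \<le> real i + (real j - real \<delta>) * l'"
proof -
  define l' where "l' = l + 1"
  define \<kappa> where "\<kappa> = min 1 (1 / l')"
  have l'pos: "l' > 0" unfolding l'_def using l by simp
  have kpos: "\<kappa> > 0" unfolding \<kappa>_def using l'pos by simp
  have k1: "\<kappa> * l' \<le> l'" unfolding \<kappa>_def using l'pos by (simp add: min_def)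
  have k2: "\<kappa> * l' \<le> 1"
  proof -
    have "\<kappa> \<le> 1 / l'" unfolding \<kappa>_def by simp
    then have "\<kappa> * l' \<le> (1 / l') * l'" using l'pos by (intro mult_right_mono) auto
    then show ?thesis using l'pos by simp
  qed
  have "\<kappa> * l' \<le> real i + (real j - real \<delta>) * l'" if bij: "b i j \<noteq> 0" for i j
  proof -
    have jms: "ms \<le> real j" using G1 bij by blast
    show ?thesis
    proof (cases "j = \<delta>")
      case True
      then have "real j = ms" using jms dle by simp
      then have "(ms1 - ms) * ns \<le> (ms1 - ms) * real i" using G2 bij by force
      then have "ns \<le> real i" using Apos by simp
      then have "0 < real i" using ns1pos two by linarith
      then have "0 < i" by simp
      then have "1 \<le> real i" by simp
      then show ?thesis using True k2 by simp
    next
      case False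
      then have "real \<delta> + 1 \<le> real j" using jms dle by linarith
      then have "1 * l' \<le> (real j - real \<delta>) * l'" using l'pos by (intro mult_right_mono) auto
      then show ?thesis using k1 by simp
    qed
  qed
  then show ?thesis using kpos l'pos unfolding l'_def by (intro exI[of _ "l + 1"]) auto
qed

lemma cond_gt:
  assumes G1: "\<forall>i j. b i j \<noteq> 0 \<longrightarrow> ms \<le> real j"
    and G2: "\<forall>i j. b i j \<noteq> 0 \<longrightarrow> (ms1 - ms) * ns + (ns - ns1) * ms \<le> (ms1 - ms) * real i + (ns - ns1) * real j"
    and Apos: "ms < ms1" and ns1pos: "0 \<le> ns1" and two: "ns1 < ns"
    and case2: "real \<delta> \<le> ms1 + ns1 * (ms1 - ms) / (ns - ns1)"
    and dgt: "ms < real \<delta>" and nb0: "b 0 \<delta> = 0"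
    and l: "0 < l" and la: "l < ns / (real \<delta> - ms)"
  shows "\<exists>l'>l. \<exists>\<kappa>>0. \<forall>i j. b i j \<noteq> 0 \<longrightarrow> \<kappa> * l' \<le> real i + (real j - real \<delta>) * l'"
proof -
  define \<alpha> where "\<alpha> = ns / (real \<delta> - ms)"
  define l' where "l' = (l + \<alpha>) / 2"
  have la0: "l < \<alpha>" using la unfolding \<alpha>_def by simp
  have la': "l < l'" "l' < \<alpha>" using la0 unfolding l'_def by simp_all
  define \<kappa> where "\<kappa> = min 1 (min (1 / l') ((\<alpha> - l') / l'))"
  have l'pos: "l' > 0" using la' l by simp
  have kpos: "\<kappa> > 0" unfolding \<kappa>_def using l'pos la' by simp
  have k1: "\<kappa> * l' \<le> l'" unfolding \<kappa>_def using l'pos by (simp add: min_def)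
  have k2: "\<kappa> * l' \<le> 1"
  proof -
    have "\<kappa> \<le> 1 / l'" unfolding \<kappa>_def by simp
    then have "\<kappa> * l' \<le> (1 / l') * l'" using l'pos by (intro mult_right_mono) auto
    then show ?thesis using l'pos by simp
  qed
  have k3: "\<kappa> * l' \<le> \<alpha> - l'"
  proof -
    have "\<kappa> \<le> (\<alpha> - l') / l'" unfolding \<kappa>_def by simp
    then have "\<kappa> * l' \<le> ((\<alpha> - l') / l') * l'" using l'pos by (intro mult_right_mono) auto
    then show ?thesis using l'pos by simp
  qed
  define A where "A = ms1 - ms"
  define B where "B = ns - ns1"
  have A: "A > 0" and B: "B > 0" using Apos two unfolding A_def B_def by simp_all
  have "real \<delta> * B \<le> (ms1 + ns1 * A / B) * B" using case2 B unfolding A_def B_def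
    by (intro mult_right_mono) auto
  then have c2: "B * real \<delta> \<le> B * ms1 + ns1 * A" using B by (simp add: algebra_simps)
  have dms: "real \<delta> - ms > 0" using dgt by simp
  have main: "ns * (real \<delta> - real j) \<le> real i * (real \<delta> - ms)" if bij: "b i j \<noteq> 0" for i j
  proof -
    have jms: "ms \<le> real j" using G1 bij by blast
    have g2: "A * ns + B * ms \<le> A * real i + B * real j" using G2 bij unfolding A_def B_def by blast
    have "(real \<delta> - ms) * (A * ns + B * ms - B * real j) \<le> (real \<delta> - ms) * (A * real i)"
      using g2 dms by (intro mult_left_mono) auto
    moreover have "(real \<delta> - ms) * (A * ns + B * ms - B * real j) - A * ns * (real \<delta> - real j)
        = (real j - ms) * (A * ns - B * (real \<delta> - ms))" by (simp add: algebra_simps)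
    moreover have "A * ns - B * (real \<delta> - ms) \<ge> 0"
    proof -
      have "B * ms1 + ns1 * A = A * ns + B * ms" unfolding A_def B_def by (simp add: algebra_simps)
      then show ?thesis using c2 by (simp add: algebra_simps)
    qed
    ultimately have "A * ns * (real \<delta> - real j) \<le> A * (real i * (real \<delta> - ms))"
      using jms by (smt (verit) mult_nonneg_nonneg mult.commute mult.left_commute)
    then show ?thesis using A by simp
  qed
  have "\<kappa> * l' \<le> real i + (real j - real \<delta>) * l'" if bij: "b i j \<noteq> 0" for i j
  proof (cases "j < \<delta>")
    case True
    have m: "ns * (real \<delta> - real j) \<le> real i * (real \<delta> - ms)" by (rule main[OF bij])
    have "\<alpha> * (real \<delta> - real j) \<le> real i"
    proof -
      have "\<alpha> * (real \<delta> - real j) = ns * (real \<delta> - real j) / (real \<delta> - ms)" unfolding \<alpha>_def by simp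
      also have "\<dots> \<le> real i" using m dms by (simp add: divide_le_eq)
      finally show ?thesis .
    qed
    moreover have dj: "1 \<le> real \<delta> - real j" using True by linarith
    moreover have "(\<alpha> - l') * 1 \<le> (\<alpha> - l') * (real \<delta> - real j)" using dj la' by (intro mult_left_mono) auto
    ultimately have "\<alpha> - l' \<le> real i + (real j - real \<delta>) * l'" by (simp add: algebra_simps)
    then show ?thesis using k3 by simp
  next
    case False
    show ?thesis
    proof (cases "j = \<delta>")
      case True
      have "i \<noteq> 0"
      proof
        assume "i = 0"
        with nb0 bij True show False by simp
      qed
      then have "1 \<le> real i" by simp
      then show ?thesis using True k2 by simp
    next
      case False
      then have "real \<delta> + 1 \<le> real j" using \<open>\<not> j < \<delta>\<close> by linarith
      then have "1 * l' \<le> (real j - real \<delta>) * l'" using l'pos by (intro mult_right_mono) auto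
      then show ?thesis using k1 by simp
    qed
  qed
  then show ?thesis using kpos la' by blast
qed



lemma p_facts:
  fixes p :: "complex \<Rightarrow> complex"
  assumes D: "open D" "0 \<in> D" and p_holo: "p holomorphic_on D"
    and a_nz: "a \<noteq> 0" and delta: "\<delta> \<ge> 1"
    and p_expand: "(\<lambda>z. p z - a * z ^ \<delta>) \<in> O[at 0](\<lambda>z. z ^ (\<delta> + 1))"
  shows "p 0 = 0 \<and> (\<exists>\<rho>>0. \<forall>z. norm z < \<rho> \<longrightarrow>
            norm a / 2 * norm z ^ \<delta> \<le> norm (p z) \<and> norm (p z) \<le> 2 * norm a * norm z ^ \<delta>)"
proof -
  obtain c where c: "c > 0" and ev: "\<forall>\<^sub>F z in at 0. norm (p z - a * z ^ \<delta>) \<le> c * norm (z ^ (\<delta> + 1))"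
    using landau_o.bigE[OF p_expand] by blast
  obtain d where d: "d > 0" and hd: "\<And>z. z \<noteq> 0 \<Longrightarrow> dist z 0 < d \<Longrightarrow> norm (p z - a * z ^ \<delta>) \<le> c * norm (z ^ (\<delta> + 1))"
    using ev unfolding eventually_at by auto
  define \<rho> where "\<rho> = min d (norm a / (2 * c))"
  have \<rho>: "\<rho> > 0" unfolding \<rho>_def using d c a_nz by simp
  have bnd: "norm a / 2 * norm z ^ \<delta> \<le> norm (p z) \<and> norm (p z) \<le> 2 * norm a * norm z ^ \<delta>"
    if z0: "z \<noteq> 0" and zr: "norm z < \<rho>" for z
  proof -
    have "norm (p z - a * z ^ \<delta>) \<le> c * norm (z ^ (\<delta> + 1))" using hd[OF z0] zr unfolding \<rho>_def by simp
    also have "\<dots> = (c * norm z) * norm z ^ \<delta>" by (simp add: norm_power norm_mult algebra_simps)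
    also have "\<dots> \<le> (norm a / 2) * norm z ^ \<delta>"
    proof (rule mult_right_mono)
      have "norm z < norm a / (2 * c)" using zr unfolding \<rho>_def by simp
      then have "c * norm z < c * (norm a / (2 * c))" using c by (intro mult_strict_left_mono) auto
      also have "c * (norm a / (2 * c)) = norm a / 2" using c by simp
      finally show "c * norm z \<le> norm a / 2" by simp
    qed simp
    finally have e: "norm (p z - a * z ^ \<delta>) \<le> norm a / 2 * norm z ^ \<delta>" .
    have na: "norm (a * z ^ \<delta>) = norm a * norm z ^ \<delta>" by (simp add: norm_mult norm_power)
    have "norm (a * z ^ \<delta>) \<le> norm (p z) + norm (p z - a * z ^ \<delta>)" 
      using norm_triangle_ineq4[of "p z" "p z - a * z ^ \<delta>"] by simp
    moreover have "norm (p z) \<le> norm (a * z ^ \<delta>) + norm (p z - a * z ^ \<delta>)" 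
      using norm_triangle_ineq[of "a * z ^ \<delta>" "p z - a * z ^ \<delta>"] by simp
    ultimately show ?thesis using e na by (simp add: algebra_simps)
  qed
  have lim1: "(p \<longlongrightarrow> p 0) (at 0)"
  proof -
    have "continuous_on D p" using p_holo by (rule holomorphic_on_imp_continuous_on)
    then have "isCont p 0" using D continuous_on_eq_continuous_at by blast
    then show ?thesis unfolding isCont_def .
  qed
  have lim2: "(p \<longlongrightarrow> 0) (at 0)"
  proof (rule Lim_null_comparison)
    show "\<forall>\<^sub>F z in at 0. norm (p z) \<le> 2 * norm a * norm z ^ \<delta>"
      unfolding eventually_at using \<rho> bnd by (intro exI[of _ \<rho>]) auto
    have n0: "((\<lambda>z::complex. norm z) \<longlongrightarrow> 0) (at 0)"
      using tendsto_norm[OF tendsto_ident_at[of "0::complex" UNIV]] by simp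
    have "((\<lambda>z::complex. 2 * norm a * norm z ^ \<delta>) \<longlongrightarrow> 2 * norm a * 0 ^ \<delta>) (at 0)"
      by (rule tendsto_mult_left[OF tendsto_power[OF n0]])
    moreover have "(0::real) ^ \<delta> = 0" using delta by simp
    ultimately show "((\<lambda>z::complex. 2 * norm a * norm z ^ \<delta>) \<longlongrightarrow> 0) (at 0)" by simp
  qed
  have p0: "p 0 = 0" using tendsto_unique[OF at_neq_bot lim1 lim2] .
  have "\<forall>z. norm z < \<rho> \<longrightarrow> norm a / 2 * norm z ^ \<delta> \<le> norm (p z) \<and> norm (p z) \<le> 2 * norm a * norm z ^ \<delta>"
  proof (intro allI impI)
    fix z :: complex assume zr: "norm z < \<rho>"
    show "norm a / 2 * norm z ^ \<delta> \<le> norm (p z) \<and> norm (p z) \<le> 2 * norm a * norm z ^ \<delta>"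
    proof (cases "z = 0")
      case True
      have "\<delta> \<noteq> 0" using delta by simp
      then show ?thesis using p0 True by (simp add: power_0_left)
    next
      case False then show ?thesis using bnd zr by blast
    qed
  qed
  then show ?thesis using p0 \<rho> by blast
qed

lemma qbound:
  fixes b :: "nat \<Rightarrow> nat \<Rightarrow> complex" and z w t Q :: complex
  assumes hs: "((\<lambda>(i, j). b i j * z ^ i * w ^ j) has_sum Q) UNIV"
    and sm: "(\<lambda>(i, j). b i j * t ^ i * t ^ j) summable_on UNIV"
    and K: "K \<ge> 0"
    and tb: "\<And>i j. b i j \<noteq> 0 \<Longrightarrow> norm z ^ i * norm w ^ j \<le> K * (norm t ^ i * norm t ^ j)"
  shows "norm Q \<le> K * (\<Sum>\<^sub>\<infinity>(i, j). norm (b i j) * norm t ^ i * norm t ^ j)"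
proof -
  define f where "f = (\<lambda>(i, j). b i j * z ^ i * w ^ j)"
  define G where "G = (\<lambda>(i::nat, j::nat). norm (b i j) * norm t ^ i * norm t ^ j)"
  have "(\<lambda>x. norm ((\<lambda>(i, j). b i j * t ^ i * t ^ j) x)) summable_on UNIV"
    using sm summable_on_iff_abs_summable_on_complex by blast
  moreover have "(\<lambda>x. norm ((\<lambda>(i, j). b i j * t ^ i * t ^ j) x)) = G"
    unfolding G_def by (auto simp: norm_mult norm_power)
  ultimately have Gs: "G summable_on UNIV" by simp
  have KGs: "(\<lambda>x. K * G x) summable_on UNIV" using Gs by (rule summable_on_cmult_right)
  have fle: "norm (f x) \<le> K * G x" for x
  proof (cases x)
    case (Pair i j)
    show ?thesis
    proof (cases "b i j = 0")
      case True then show ?thesis using Pair K unfolding f_def G_def by simp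
    next
      case False
      have "norm (f x) = norm (b i j) * (norm z ^ i * norm w ^ j)"
        using Pair unfolding f_def by (simp add: norm_mult norm_power)
      also have "\<dots> \<le> norm (b i j) * (K * (norm t ^ i * norm t ^ j))"
        using tb[OF False] by (intro mult_left_mono) auto
      also have "\<dots> = K * G x" using Pair unfolding G_def by simp
      finally show ?thesis .
    qed
  qed
  have fa: "(\<lambda>x. norm (f x)) summable_on UNIV"
    by (rule Infinite_Sum.abs_summable_on_comparison_test'[OF KGs]) (use fle in auto)
  have "Q = infsum f UNIV" using infsumI[OF hs] unfolding f_def by simp
  then have "norm Q \<le> (\<Sum>\<^sub>\<infinity>x. norm (f x))" using norm_infsum_bound[OF fa] by simp
  also have "\<dots> \<le> (\<Sum>\<^sub>\<infinity>x. K * G x)" using fa KGs fle by (intro infsum_mono) auto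
  also have "\<dots> = K * infsum G UNIV" by (rule infsum_cmult_right')
  finally show ?thesis unfolding G_def .
qed



lemma qbound1:
  fixes b :: "nat \<Rightarrow> nat \<Rightarrow> complex" and z w t Q :: complex
  assumes hs: "((\<lambda>(i, j). b i j * z ^ i * w ^ j) has_sum Q) UNIV"
    and sm: "(\<lambda>(i, j). b i j * t ^ i * t ^ j) summable_on UNIV"
    and t0: "0 < norm t" and t1: "norm t \<le> 1"
    and b00: "b 0 0 = 0" and b01: "b 0 1 = 0"
    and zt: "norm z \<le> norm t" and wt: "norm w \<le> norm t"
  shows "norm Q \<le> (norm z + norm w ^ 2) * ((\<Sum>\<^sub>\<infinity>(i, j). norm (b i j) * norm t ^ i * norm t ^ j) / norm t ^ 2)"
proof -
  let ?\<tau> = "norm t"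
  define K where "K = (norm z + norm w ^ 2) / ?\<tau> ^ 2"
  have K: "K \<ge> 0" unfolding K_def by simp
  have "norm Q \<le> K * (\<Sum>\<^sub>\<infinity>(i, j). norm (b i j) * norm t ^ i * norm t ^ j)"
  proof (rule qbound[OF hs sm K])
    fix i j assume bij: "b i j \<noteq> 0"
    show "norm z ^ i * norm w ^ j \<le> K * (?\<tau> ^ i * ?\<tau> ^ j)"
    proof (cases i)
      case 0
      have "j \<noteq> 0" using bij b00 0 by (cases j) auto
      moreover have "j \<noteq> 1" using bij b01 0 by auto
      ultimately have "j \<noteq> 0" "j \<noteq> 1" by auto
      then obtain k where jk: "j = k + 2" by (metis add_2_eq_Suc' not0_implies_Suc One_nat_def)
      have "norm w ^ j = norm w ^ 2 * norm w ^ k" unfolding jk by (simp add: power_add mult.commute power2_eq_square)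
      also have "\<dots> \<le> norm w ^ 2 * ?\<tau> ^ k" using wt by (intro mult_left_mono power_mono) auto
      also have "\<dots> = (norm w ^ 2 / ?\<tau> ^ 2) * (?\<tau> ^ 0 * ?\<tau> ^ j)" unfolding jk using t0 by (simp add: power_add power2_eq_square)
      also have "\<dots> \<le> K * (?\<tau> ^ 0 * ?\<tau> ^ j)" unfolding K_def
        by (intro mult_right_mono divide_right_mono) auto
      finally show ?thesis using 0 by simp
    next
      case (Suc k)
      have "norm z ^ i * norm w ^ j = norm z * (norm z ^ k * norm w ^ j)" unfolding Suc by simp
      also have "\<dots> \<le> norm z * (?\<tau> ^ k * ?\<tau> ^ j)" using zt wt
        by (intro mult_left_mono mult_mono power_mono) auto
      also have "\<dots> = (norm z / ?\<tau>) * (?\<tau> ^ i * ?\<tau> ^ j)" unfolding Suc using t0 by simp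
      also have "\<dots> \<le> (norm z / ?\<tau> ^ 2) * (?\<tau> ^ i * ?\<tau> ^ j)"
      proof (intro mult_right_mono)
        have "?\<tau> ^ 2 \<le> ?\<tau>" using t0 t1 by (simp add: power2_eq_square mult_le_cancel_left1)
        then show "norm z / ?\<tau> \<le> norm z / ?\<tau> ^ 2" using t0 by (intro divide_left_mono) auto
      qed auto
      also have "\<dots> \<le> K * (?\<tau> ^ i * ?\<tau> ^ j)" unfolding K_def
        by (intro mult_right_mono divide_right_mono) auto
      finally show ?thesis .
    qed
  qed
  then show ?thesis unfolding K_def by simp
qed

lemma qbound2:
  fixes b :: "nat \<Rightarrow> nat \<Rightarrow> complex" and z w t Q :: complex and \<delta> :: nat
  assumes hs: "((\<lambda>(i, j). b i j * z ^ i * w ^ j) has_sum Q) UNIV"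
    and sm: "(\<lambda>(i, j). b i j * t ^ i * t ^ j) summable_on UNIV"
    and t0: "0 < norm t" and t1: "norm t < 1"
    and l': "0 < l'" and \<kappa>: "0 < \<kappa>"
    and cond: "\<And>i j. b i j \<noteq> 0 \<Longrightarrow> \<kappa> * l' \<le> real i + (real j - real \<delta>) * l'"
    and \<mu>: "\<mu> = min 1 (1 / l')" and \<sigma>: "\<sigma> = norm t powr (1 / \<mu>)"
    and w0: "0 < norm w" and w\<sigma>: "norm w \<le> \<sigma>" and zw: "norm z powr l' \<le> norm w"
  shows "norm Q \<le> norm w powr (real \<delta> + \<kappa>) * ((\<Sum>\<^sub>\<infinity>(i, j). norm (b i j) * norm t ^ i * norm t ^ j)
            / \<sigma> powr (real \<delta> + \<kappa>))"
proof -
  let ?\<tau> = "norm t"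
  let ?E = "real \<delta> + \<kappa>"
  define K where "K = norm w powr ?E / \<sigma> powr ?E"
  have \<mu>0: "0 < \<mu>" "\<mu> \<le> 1" "\<mu> \<le> 1 / l'" unfolding \<mu> using l' by auto
  have \<sigma>0: "0 < \<sigma>" unfolding \<sigma> using t0 by simp
  have \<sigma>\<mu>: "\<sigma> powr \<mu> = ?\<tau>" unfolding \<sigma> using \<mu>0 t0 by (simp add: powr_powr)
  have \<sigma>1: "\<sigma> \<le> 1"
  proof -
    have "?\<tau> powr (1 / \<mu>) \<le> ?\<tau> powr 0" using t0 t1 \<mu>0 by (intro powr_mono') auto
    then show ?thesis unfolding \<sigma> using t0 by simp
  qed
  have K: "K \<ge> 0" unfolding K_def by simp
  have "norm Q \<le> K * (\<Sum>\<^sub>\<infinity>(i, j). norm (b i j) * norm t ^ i * norm t ^ j)"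
  proof (rule qbound[OF hs sm K])
    fix i j assume bij: "b i j \<noteq> 0"
    have zi: "norm z ^ i \<le> norm w powr (real i / l')"
    proof (cases "z = 0")
      case True then show ?thesis using w0 by (cases i) auto
    next
      case False
      have "norm z = (norm z powr l') powr (1 / l')" using False l' by (simp add: powr_powr)
      also have "\<dots> \<le> norm w powr (1 / l')" using zw l' by (intro powr_mono2) auto
      finally have "norm z ^ i \<le> (norm w powr (1 / l')) ^ i" by (intro power_mono) auto
      also have "\<dots> = norm w powr (real i / l')"
        using w0 by (simp add: powr_realpow[symmetric] powr_powr)
      finally show ?thesis .
    qed
    have wj: "norm w ^ j = norm w powr real j" using w0 by (simp add: powr_realpow)
    have ex: "real i / l' + real j = ?E + (real i / l' + real j - ?E)" by simp
    have ege: "real i / l' + real j - ?E \<ge> 0"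
    proof -
      have "\<kappa> * l' \<le> real i + (real j - real \<delta>) * l'" by (rule cond[OF bij])
      then have "\<kappa> \<le> (real i + (real j - real \<delta>) * l') / l'" using l' by (simp add: field_simps)
      also have "\<dots> = real i / l' + real j - real \<delta>" using l' by (simp add: field_simps)
      finally show ?thesis by simp
    qed
    have mu_le: "\<mu> * (real i + real j) \<le> real i / l' + real j"
    proof -
      have "\<mu> * real i \<le> (1 / l') * real i" using \<mu>0 by (intro mult_right_mono) auto
      moreover have "\<mu> * real j \<le> 1 * real j" using \<mu>0 by (intro mult_right_mono) auto
      ultimately show ?thesis by (simp add: algebra_simps)
    qed
    have "norm z ^ i * norm w ^ j \<le> norm w powr (real i / l') * norm w powr real j"
      unfolding wj using zi by (intro mult_right_mono) auto
    also have "\<dots> = norm w powr ?E * norm w powr (real i / l' + real j - ?E)"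
      using w0 by (simp add: powr_add[symmetric])
    also have "\<dots> \<le> norm w powr ?E * \<sigma> powr (real i / l' + real j - ?E)"
      using w\<sigma> ege w0 by (intro mult_left_mono powr_mono2) auto
    also have "\<sigma> powr (real i / l' + real j - ?E) = \<sigma> powr (real i / l' + real j) / \<sigma> powr ?E"
      by (rule powr_diff)
    also have "\<sigma> powr (real i / l' + real j) \<le> \<sigma> powr (\<mu> * (real i + real j))"
      using mu_le \<sigma>0 \<sigma>1 by (intro powr_mono') auto
    also have "\<sigma> powr (\<mu> * (real i + real j)) = ?\<tau> ^ i * ?\<tau> ^ j"
    proof -
      have "\<sigma> powr (\<mu> * (real i + real j)) = (\<sigma> powr \<mu>) powr (real i + real j)" by (simp add: powr_powr)
      also have "\<dots> = ?\<tau> powr (real i + real j)" using \<sigma>\<mu> by simp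
      also have "\<dots> = ?\<tau> ^ i * ?\<tau> ^ j" using t0 by (simp add: powr_add powr_realpow)
      finally show ?thesis .
    qed
    finally show "norm z ^ i * norm w ^ j \<le> K * (?\<tau> ^ i * ?\<tau> ^ j)"
      unfolding K_def using \<sigma>0 by (simp add: divide_right_mono mult_left_mono)
  qed
  then show ?thesis unfolding K_def by (simp add: mult_ac)
qed



lemma growth_contra:
  fixes Z W :: "nat \<Rightarrow> real"
  assumes d: "d > 1" and \<kappa>: "\<kappa> > 0" and c: "c \<ge> 0"
    and Z1: "\<And>n. n \<ge> N \<Longrightarrow> 1 \<le> Z n" and Wp: "\<And>n. n \<ge> N \<Longrightarrow> 0 < W n"
    and Wg: "\<And>n. n \<ge> N \<Longrightarrow> (d + \<kappa>) * W n \<le> W (Suc n)"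
    and Zg: "\<And>n. n \<ge> N \<Longrightarrow> Z (Suc n) + c \<le> d * (Z n + c)"
    and up: "\<And>n. n \<ge> N \<Longrightarrow> W n \<le> L * (Z n + c)"
  shows False
proof -
  define q where "q = (d + \<kappa>) / d"
  define R where "R = (\<lambda>n. W n / (Z n + c))"
  have q1: "q > 1" unfolding q_def using d \<kappa> by (simp add: field_simps)
  have Rstep: "q * R n \<le> R (Suc n)" if n: "n \<ge> N" for n
  proof -
    have pos: "0 < Z n + c" "0 < Z (Suc n) + c" using Z1[OF n] Z1[of "Suc n"] n c by auto
    have "q * R n = ((d + \<kappa>) * W n) / (d * (Z n + c))" unfolding q_def R_def by simp
    also have "\<dots> \<le> W (Suc n) / (Z (Suc n) + c)"
    proof (rule frac_le)
      show "0 \<le> W (Suc n)" using Wp[of "Suc n"] n by simp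
      show "(d + \<kappa>) * W n \<le> W (Suc n)" using Wg[OF n] .
      show "0 < Z (Suc n) + c" using pos by simp
      show "Z (Suc n) + c \<le> d * (Z n + c)" using Zg[OF n] .
    qed
    finally show ?thesis unfolding R_def .
  qed
  have Rk: "q ^ k * R N \<le> R (N + k)" for k
  proof (induction k)
    case 0 then show ?case by simp
  next
    case (Suc k)
    have "q ^ Suc k * R N = q * (q ^ k * R N)" by simp
    also have "\<dots> \<le> q * R (N + k)" using Suc q1 by (intro mult_left_mono) auto
    also have "\<dots> \<le> R (Suc (N + k))" by (rule Rstep) simp
    finally show ?case by simp
  qed
  have RN: "R N > 0" unfolding R_def using Wp[of N] Z1[of N] c by simp
  have Rle: "R n \<le> L" if "n \<ge> N" for n
  proof -
    have "0 < Z n + c" using Z1[OF that] c by simp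
    then show ?thesis unfolding R_def using up[OF that] by (simp add: divide_le_eq)
  qed
  obtain k where k: "L / R N < q ^ k" using real_arch_pow[OF q1] by blast
  then have "L < q ^ k * R N" using RN by (simp add: divide_less_eq)
  also have "\<dots> \<le> R (N + k)" by (rule Rk)
  also have "\<dots> \<le> L" by (rule Rle) simp
  finally show False by simp
qed



lemma skew_iter_Suc: "(skew p q ^^ Suc n) x = (p (fst ((skew p q ^^ n) x)), q (fst ((skew p q ^^ n) x)) (snd ((skew p q ^^ n) x)))"
  by (simp add: skew_def case_prod_unfold)

lemma skew_iter_fst: "fst ((skew p q ^^ n) x) = (p ^^ n) (fst x)"
  by (induction n) (simp_all add: skew_iter_Suc del: funpow.simps, simp)

lemma dir1:
  fixes p :: "complex \<Rightarrow> complex" and q :: "complex \<Rightarrow> complex \<Rightarrow> complex"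
    and b :: "nat \<Rightarrow> nat \<Rightarrow> complex" and t :: complex
  assumes p0: "p 0 = 0" and \<rho>p: "\<rho>p > 0"
    and pb: "\<And>z. norm z < \<rho>p \<Longrightarrow> norm a / 2 * norm z ^ \<delta> \<le> norm (p z) \<and> norm (p z) \<le> 2 * norm a * norm z ^ \<delta>"
    and a_nz: "a \<noteq> 0" and delta: "\<delta> \<ge> 2"
    and tD: "\<And>z. norm z \<le> norm t \<Longrightarrow> z \<in> D" and t0: "0 < norm t" and t1: "norm t \<le> 1"
    and q_series: "\<forall>z\<in>D. \<forall>w. ((\<lambda>(i, j). b i j * z ^ i * w ^ j) has_sum q z w) UNIV"
    and b00: "b 0 0 = 0" and b01: "b 0 1 = 0"
  shows "\<exists>r0>0. r0 \<le> 1 \<and> (\<forall>r l. 0 < r \<longrightarrow> r < r0 \<longrightarrow> 0 < l \<longrightarrow>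
           (\<forall>x\<in>Uset r l. x \<in> basin (skew p q) (D \<times> UNIV) (0, 0) \<and> (\<forall>n. fst ((skew p q ^^ n) x) \<noteq> 0)))"
proof -
  let ?F = "skew p q"
  let ?\<tau> = "norm t"
  have sm: "(\<lambda>(i, j). b i j * t ^ i * t ^ j) summable_on UNIV"
    using q_series tD[of t] by (auto intro: has_sum_imp_summable)
  define \<Sigma> where "\<Sigma> = (\<Sum>\<^sub>\<infinity>(i, j). norm (b i j) * norm t ^ i * norm t ^ j)"
  define C where "C = max (\<Sigma> / ?\<tau> ^ 2) 1"
  have C1: "C \<ge> 1" unfolding C_def by simp
  have qb: "norm (q z w) \<le> C * (norm z + norm w ^ 2)" if "norm z \<le> ?\<tau>" "norm w \<le> ?\<tau>" for z w
  proof -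
    have hs: "((\<lambda>(i, j). b i j * z ^ i * w ^ j) has_sum q z w) UNIV" using q_series tD that by blast
    have "norm (q z w) \<le> (norm z + norm w ^ 2) * (\<Sigma> / ?\<tau> ^ 2)"
      unfolding \<Sigma>_def by (rule qbound1[OF hs sm t0 t1 b00 b01 that])
    also have "\<dots> \<le> (norm z + norm w ^ 2) * C" unfolding C_def by (intro mult_left_mono) auto
    finally show ?thesis by (simp add: mult_ac)
  qed
  define \<theta> where "\<theta> = min ?\<tau> (1 / (2 * C))"
  define \<eta> where "\<eta> = min (min \<theta> (\<theta> / (4 * C))) (min (\<rho>p / 2) (min 1 (1 / (8 * norm a))))"
  have \<theta>0: "0 < \<theta>" "\<theta> \<le> ?\<tau>" "\<theta> \<le> 1 / (2 * C)" unfolding \<theta>_def using t0 C1 by auto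
  have \<eta>0: "0 < \<eta>" "\<eta> \<le> \<theta>" "\<eta> \<le> \<theta> / (4 * C)" "\<eta> < \<rho>p" "\<eta> \<le> 1" "\<eta> \<le> 1 / (8 * norm a)"
    unfolding \<eta>_def using \<theta>0 C1 \<rho>p a_nz by auto
  have Ctheta: "C * \<theta> \<le> 1 / 2"
  proof -
    have "C * \<theta> \<le> C * (1 / (2 * C))" using \<theta>0 C1 by (intro mult_left_mono) auto
    then show ?thesis using C1 by simp
  qed
  have Ceta: "C * \<eta> \<le> \<theta> / 4"
  proof -
    have "C * \<eta> \<le> C * (\<theta> / (4 * C))" using \<eta>0 C1 by (intro mult_left_mono) auto
    then show ?thesis using C1 by simp
  qed
  have step: "norm (p z) \<le> norm z / 4 \<and> norm (q z w) \<le> C * norm z + norm w / 2 \<and> (z \<noteq> 0 \<longrightarrow> p z \<noteq> 0)"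
    if z: "norm z \<le> \<eta>" and w: "norm w \<le> \<theta>" for z w
  proof -
    have zr: "norm z < \<rho>p" using z \<eta>0 by simp
    have z1: "norm z \<le> 1" using z \<eta>0 by simp
    have "norm z ^ \<delta> \<le> norm z ^ 2" using z1 delta by (intro power_decreasing) auto
    also have "\<dots> = norm z * norm z" by (simp add: power2_eq_square)
    also have "\<dots> \<le> norm z * (1 / (8 * norm a))" using z \<eta>0 by (intro mult_left_mono) auto
    finally have "2 * norm a * norm z ^ \<delta> \<le> 2 * norm a * (norm z * (1 / (8 * norm a)))"
      by (intro mult_left_mono) auto
    also have "\<dots> = norm z / 4" using a_nz by simp
    finally have pz: "norm (p z) \<le> norm z / 4" using pb[OF zr] by linarith
    have "norm (q z w) \<le> C * (norm z + norm w ^ 2)" using qb z w \<eta>0 \<theta>0 by simp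
    also have "\<dots> = C * norm z + (C * norm w) * norm w" by (simp add: algebra_simps power2_eq_square)
    also have "(C * norm w) * norm w \<le> (1 / 2) * norm w"
    proof (rule mult_right_mono)
      have "C * norm w \<le> C * \<theta>" using w C1 by (intro mult_left_mono) auto
      then show "C * norm w \<le> 1 / 2" using Ctheta by simp
    qed simp
    finally have qz: "norm (q z w) \<le> C * norm z + norm w / 2" by simp
    have "z \<noteq> 0 \<longrightarrow> p z \<noteq> 0"
    proof
      assume "z \<noteq> 0"
      then have "0 < norm a / 2 * norm z ^ \<delta>" using a_nz by simp
      then show "p z \<noteq> 0" using pb[OF zr] by auto
    qed
    then show ?thesis using pz qz by simp
  qed
  define M where "M = (\<lambda>y::complex \<times> complex. norm (snd y) + 4 * C * norm (fst y))"
  have inv: "norm (fst ((?F ^^ n) x)) \<le> \<eta> \<and> norm (snd ((?F ^^ n) x)) \<le> \<theta> \<and> M ((?F ^^ n) x) \<le> M x / 2 ^ n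
      \<and> fst ((?F ^^ n) x) \<noteq> 0"
    if x0: "norm (fst x) \<le> \<eta>" "norm (snd x) \<le> \<theta>" "fst x \<noteq> 0" for x n
  proof (induction n)
    case 0 then show ?case using x0 by simp
  next
    case (Suc n)
    define z where "z = fst ((?F ^^ n) x)"
    define w where "w = snd ((?F ^^ n) x)"
    have zw: "norm z \<le> \<eta>" "norm w \<le> \<theta>" "M (z, w) \<le> M x / 2 ^ n" "z \<noteq> 0"
      using Suc unfolding z_def w_def M_def by auto
    have it: "(?F ^^ Suc n) x = (p z, q z w)" unfolding z_def w_def by (rule skew_iter_Suc)
    from step[OF zw(1,2)] have s: "norm (p z) \<le> norm z / 4" "norm (q z w) \<le> C * norm z + norm w / 2" "p z \<noteq> 0"
      using zw(4) by auto
    have "norm (p z) \<le> \<eta>" using s zw \<eta>0 by simp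
    moreover have "norm (q z w) \<le> \<theta>"
    proof -
      have "C * norm z \<le> C * \<eta>" using zw C1 by (intro mult_left_mono) auto
      then show ?thesis using s(2) zw(2) Ceta \<theta>0(1) by linarith
    qed
    moreover have "M (p z, q z w) \<le> M x / 2 ^ Suc n"
    proof -
      have "4 * C * norm (p z) \<le> 4 * C * (norm z / 4)" using s(1) C1 by (intro mult_left_mono) auto
      then have "M (p z, q z w) \<le> M (z, w) / 2" unfolding M_def using s(2) by simp
      also have "\<dots> \<le> (M x / 2 ^ n) / 2" by (rule divide_right_mono[OF zw(3)]) simp
      also have "\<dots> = M x / 2 ^ Suc n" by simp
      finally show ?thesis .
    qed
    ultimately show ?case using it s(3) by simp
  qed
  define r0 where "r0 = \<eta>"
  have "\<forall>r l. 0 < r \<longrightarrow> r < r0 \<longrightarrow> 0 < l \<longrightarrow>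
           (\<forall>x\<in>Uset r l. x \<in> basin ?F (D \<times> UNIV) (0, 0) \<and> (\<forall>n. fst ((?F ^^ n) x) \<noteq> 0))"
  proof (intro allI impI ballI)
    fix r l :: real and x assume r: "0 < r" "r < r0" and l: "0 < l" and xU: "x \<in> Uset r l"
    obtain z w where x: "x = (z, w)" by (cases x)
    have zr: "norm z < r" and wr: "norm w < r * norm z powr l" using xU unfolding Uset_def x by auto
    have z0: "z \<noteq> 0" using wr by (auto simp: powr_def split: if_splits)
    have "norm z powr l \<le> 1" using zr r \<eta>0 l unfolding r0_def by (intro powr_le1) auto
    then have "r * norm z powr l \<le> r" using r by (simp add: mult_left_le)
    then have wt: "norm w \<le> \<theta>" using wr r \<eta>0 unfolding r0_def by linarith
    have zt: "norm z \<le> \<eta>" using zr r unfolding r0_def by simp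
    have I: "norm (fst ((?F ^^ n) x)) \<le> \<eta> \<and> norm (snd ((?F ^^ n) x)) \<le> \<theta> \<and> M ((?F ^^ n) x) \<le> M x / 2 ^ n
      \<and> fst ((?F ^^ n) x) \<noteq> 0" for n
      by (rule inv) (use zt wt z0 x in auto)
    have inD: "(?F ^^ n) x \<in> D \<times> UNIV" for n
    proof -
      have "norm (fst ((?F ^^ n) x)) \<le> ?\<tau>" using I[of n] \<eta>0 \<theta>0 by simp
      then have "fst ((?F ^^ n) x) \<in> D" by (rule tD)
      then show ?thesis by (cases "(?F ^^ n) x") auto
    qed
    have lim: "(\<lambda>n. (?F ^^ n) x) \<longlonglongrightarrow> 0"
    proof (rule tendsto_norm_zero_cancel, rule Lim_null_comparison)
      show "\<forall>\<^sub>F n in sequentially. norm (norm ((?F ^^ n) x)) \<le> M x / 2 ^ n"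
      proof (rule always_eventually, rule allI)
        fix n
        obtain u v where uv: "(?F ^^ n) x = (u, v)" by (cases "(?F ^^ n) x")
        have "norm (u, v) \<le> norm u + norm v" by (rule norm_Pair_le)
        also have "\<dots> \<le> M (u, v)"
        proof -
          have "1 * norm u \<le> (4 * C) * norm u" by (rule mult_right_mono) (use C1 in auto)
          then show ?thesis unfolding M_def by simp
        qed
        also have "\<dots> \<le> M x / 2 ^ n" using I[of n] uv by simp
        finally show "norm (norm ((?F ^^ n) x)) \<le> M x / 2 ^ n" using uv by simp
      qed
      show "(\<lambda>n. M x / 2 ^ n) \<longlonglongrightarrow> 0"
        by (intro tendsto_divide_0[OF tendsto_const]) (simp add: filterlim_realpow_sequentially_gt1)
    qed
    have "x \<in> basin ?F (D \<times> UNIV) (0, 0)"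
      unfolding basin_def using inD lim by (simp add: zero_prod_def)
    then show "x \<in> basin ?F (D \<times> UNIV) (0, 0) \<and> (\<forall>n. fst ((?F ^^ n) x) \<noteq> 0)" using I by blast
  qed
  moreover have "r0 > 0" "r0 \<le> 1" unfolding r0_def using \<eta>0 by auto
  ultimately show ?thesis by blast
qed



lemma dir3:
  fixes p :: "complex \<Rightarrow> complex" and q :: "complex \<Rightarrow> complex \<Rightarrow> complex"
    and b :: "nat \<Rightarrow> nat \<Rightarrow> complex" and t :: complex
  assumes \<rho>p: "\<rho>p > 0"
    and pb: "\<And>z. norm z < \<rho>p \<Longrightarrow> norm a / 2 * norm z ^ \<delta> \<le> norm (p z) \<and> norm (p z) \<le> 2 * norm a * norm z ^ \<delta>"
    and a_nz: "a \<noteq> 0" and delta: "\<delta> \<ge> 2"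
    and tD: "\<And>z. norm z \<le> norm t \<Longrightarrow> z \<in> D" and t0: "0 < norm t" and t1: "norm t < 1"
    and q_series: "\<forall>z\<in>D. \<forall>w. ((\<lambda>(i, j). b i j * z ^ i * w ^ j) has_sum q z w) UNIV"
    and l: "0 < l" and ll': "l < l'" and \<kappa>: "0 < \<kappa>"
    and cond: "\<forall>i j. b i j \<noteq> 0 \<longrightarrow> \<kappa> * l' \<le> real i + (real j - real \<delta>) * l'"
    and r: "0 < r"
    and xb: "x \<in> basin (skew p q) (D \<times> UNIV) (0, 0)"
    and nz: "\<forall>n. fst ((skew p q ^^ n) x) \<noteq> 0"
  shows "\<exists>n. (skew p q ^^ n) x \<in> Uset r l"
proof (rule ccontr)
  assume H: "\<not> (\<exists>n. (skew p q ^^ n) x \<in> Uset r l)"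
  let ?F = "skew p q"
  let ?\<tau> = "norm t"
  define z where "z = (\<lambda>n. fst ((?F ^^ n) x))"
  define w where "w = (\<lambda>n. snd ((?F ^^ n) x))"
  have zS: "z (Suc n) = p (z n)" and wS: "w (Suc n) = q (z n) (w n)" for n
    unfolding z_def w_def by (simp_all add: skew_iter_Suc del: funpow.simps)
  have lim: "(\<lambda>n. (?F ^^ n) x) \<longlonglongrightarrow> (0, 0)" using xb unfolding basin_def by simp
  have zl: "(\<lambda>n. norm (z n)) \<longlonglongrightarrow> 0"
    using tendsto_norm[OF tendsto_fst[OF lim]] unfolding z_def by simp
  have wl: "(\<lambda>n. norm (w n)) \<longlonglongrightarrow> 0"
    using tendsto_norm[OF tendsto_snd[OF lim]] unfolding w_def by simp
  have l'pos: "l' > 0" using l ll' by simp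
  have sm: "(\<lambda>(i, j). b i j * t ^ i * t ^ j) summable_on UNIV"
    using q_series tD[of t] by (auto intro: has_sum_imp_summable)
  define \<Sigma> where "\<Sigma> = (\<Sum>\<^sub>\<infinity>(i, j). norm (b i j) * norm t ^ i * norm t ^ j)"
  define \<mu> where "\<mu> = min 1 (1 / l')"
  define \<sigma> where "\<sigma> = ?\<tau> powr (1 / \<mu>)"
  have \<mu>0: "0 < \<mu>" "\<mu> \<le> 1" unfolding \<mu>_def using l'pos by auto
  have \<sigma>0: "0 < \<sigma>" unfolding \<sigma>_def using t0 by simp
  have \<sigma>1: "\<sigma> \<le> ?\<tau>"
  proof -
    have "?\<tau> powr (1 / \<mu>) \<le> ?\<tau> powr 1" using t0 t1 \<mu>0 by (intro powr_mono') auto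
    then show ?thesis unfolding \<sigma>_def using t0 by simp
  qed
  define C2 where "C2 = max 1 (\<Sigma> / \<sigma> powr (real \<delta> + \<kappa>))"
  have C2: "C2 \<ge> 1" unfolding C2_def by simp
  define c2 where "c2 = ln C2"
  have c2: "c2 \<ge> 0" unfolding c2_def using C2 by simp
  define c1 where "c1 = \<bar>ln (norm a / 2)\<bar>"
  define c where "c = c1 / (real \<delta> - 1)"
  have dpos: "real \<delta> - 1 \<ge> 1" using delta by simp
  have c: "c \<ge> 0" unfolding c_def c1_def using dpos by simp
  have cc1: "c1 + c \<le> real \<delta> * c"
  proof -
    have "c1 = (real \<delta> - 1) * c" unfolding c_def using dpos by simp
    then show ?thesis by (simp add: algebra_simps)
  qed
  define c0 where "c0 = \<bar>ln r\<bar>"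
  have c0: "c0 \<ge> 0" unfolding c0_def by simp
  define Zt where "Zt = max 1 (c0 / (l' - l))"
  define ez where "ez = min (min r \<rho>p) (min ?\<tau> (exp (- Zt)))"
  define ew where "ew = min \<sigma> (exp (- (2 * c2 / \<kappa>)))"
  have ez: "ez > 0" unfolding ez_def using r \<rho>p t0 by simp
  have ew: "ew > 0" unfolding ew_def using \<sigma>0 by simp
  obtain N1 where N1: "\<And>n. n \<ge> N1 \<Longrightarrow> norm (z n) < ez"
    using order_tendstoD(2)[OF zl ez] unfolding eventually_sequentially by blast
  obtain N2 where N2: "\<And>n. n \<ge> N2 \<Longrightarrow> norm (w n) < ew"
    using order_tendstoD(2)[OF wl ew] unfolding eventually_sequentially by blast
  define N where "N = max N1 N2"
  define Z where "Z = (\<lambda>n. - ln (norm (z n)))"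
  define W where "W = (\<lambda>n. - ln (norm (w n)))"
  have facts: "z n \<noteq> 0 \<and> w n \<noteq> 0 \<and> norm (z n) < r \<and> norm (z n) < \<rho>p \<and> norm (z n) \<le> ?\<tau>
      \<and> Zt < Z n \<and> norm (w n) < \<sigma> \<and> 2 * c2 / \<kappa> < W n \<and> r * norm (z n) powr l \<le> norm (w n)"
    if n: "n \<ge> N" for n
  proof -
    have zn: "norm (z n) < ez" using N1 n unfolding N_def by simp
    have wn: "norm (w n) < ew" using N2 n unfolding N_def by simp
    have z0: "z n \<noteq> 0" using nz unfolding z_def by simp
    have zr: "norm (z n) < r" using zn unfolding ez_def by simp
    have notU: "\<not> ((z n, w n) \<in> Uset r l)" using H unfolding z_def w_def by simp
    have wge: "r * norm (z n) powr l \<le> norm (w n)" using notU zr unfolding Uset_def by auto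
    have "0 < r * norm (z n) powr l" using r z0 by simp
    then have w0: "w n \<noteq> 0" using wge by auto
    have "ln (norm (z n)) < ln (exp (- Zt))"
      using zn z0 unfolding ez_def by (subst ln_less_cancel_iff) auto
    then have "Zt < Z n" unfolding Z_def by simp
    moreover have "ln (norm (w n)) < ln (exp (- (2 * c2 / \<kappa>)))"
      using wn w0 unfolding ew_def by (subst ln_less_cancel_iff) auto
    then have "2 * c2 / \<kappa> < W n" unfolding W_def by simp
    moreover have "norm (w n) < \<sigma>" using wn unfolding ew_def by simp
    moreover have "norm (z n) < \<rho>p" "norm (z n) \<le> ?\<tau>" using zn unfolding ez_def by auto
    ultimately show ?thesis using z0 w0 zr wge by blast
  qed
  have Zge: "1 \<le> Z n" "c0 / (l' - l) \<le> Z n" if "n \<ge> N" for n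
    using facts[OF that] unfolding Zt_def by auto
  have Wpos: "0 < W n" if "n \<ge> N" for n
  proof -
    have "2 * c2 / \<kappa> \<ge> 0" using c2 \<kappa> by simp
    then show ?thesis using facts[OF that] by linarith
  qed
  have WleZ: "W n \<le> c0 + l * Z n" if n: "n \<ge> N" for n
  proof -
    have f: "z n \<noteq> 0" "w n \<noteq> 0" "r * norm (z n) powr l \<le> norm (w n)" using facts[OF n] by auto
    have "ln (r * norm (z n) powr l) \<le> ln (norm (w n))"
      using f r by (subst ln_le_cancel_iff) auto
    moreover have "ln (r * norm (z n) powr l) = ln r + l * ln (norm (z n))"
      using f r by (simp add: ln_mult ln_powr)
    ultimately have "- W n \<ge> ln r - l * Z n" unfolding W_def Z_def by simp
    moreover have "- ln r \<le> c0" unfolding c0_def by simp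
    ultimately show ?thesis by linarith
  qed
  have up: "W n \<le> (l + c0) * (Z n + c)" if n: "n \<ge> N" for n
  proof -
    have "c0 * 1 \<le> c0 * (Z n + c)" using Zge[OF n] c c0 by (intro mult_left_mono) auto
    moreover have "l * Z n \<le> l * (Z n + c)" using c l by (intro mult_left_mono) auto
    ultimately show ?thesis using WleZ[OF n] by (simp add: algebra_simps)
  qed
  have Zg: "Z (Suc n) + c \<le> real \<delta> * (Z n + c)" if n: "n \<ge> N" for n
  proof -
    have f: "z n \<noteq> 0" "norm (z n) < \<rho>p" using facts[OF n] by auto
    have f1: "z (Suc n) \<noteq> 0" using facts[of "Suc n"] n by auto
    have "norm a / 2 * norm (z n) ^ \<delta> \<le> norm (z (Suc n))" using pb[OF f(2)] zS by simp
    then have "ln (norm a / 2 * norm (z n) ^ \<delta>) \<le> ln (norm (z (Suc n)))"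
      using f f1 a_nz by (subst ln_le_cancel_iff) auto
    moreover have "ln (norm a / 2 * norm (z n) ^ \<delta>) = ln (norm a / 2) + real \<delta> * ln (norm (z n))"
      unfolding ln_mult[of "norm a / 2" "norm (z n) ^ \<delta>"] using f a_nz by (simp add: ln_realpow)
    ultimately have "Z (Suc n) \<le> real \<delta> * Z n - ln (norm a / 2)" unfolding Z_def by simp
    moreover have "- ln (norm a / 2) \<le> c1" unfolding c1_def by simp
    ultimately show ?thesis using cc1 by (simp add: algebra_simps)
  qed
  have Wg: "(real \<delta> + \<kappa> / 2) * W n \<le> W (Suc n)" if n: "n \<ge> N" for n
  proof -
    have f: "z n \<noteq> 0" "w n \<noteq> 0" "norm (z n) \<le> ?\<tau>" "norm (w n) < \<sigma>" "2 * c2 / \<kappa> < W n"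
      using facts[OF n] by auto
    have f1: "w (Suc n) \<noteq> 0" using facts[of "Suc n"] n by auto
    have hs: "((\<lambda>(i, j). b i j * z n ^ i * w n ^ j) has_sum q (z n) (w n)) UNIV"
      using q_series tD[OF f(3)] by blast
    have zw: "norm (z n) powr l' \<le> norm (w n)"
    proof -
      have "W n \<le> l' * Z n"
      proof -
        have "c0 \<le> (l' - l) * Z n" using Zge[OF n] ll' by (simp add: divide_le_eq mult.commute)
        then show ?thesis using WleZ[OF n] by (simp add: algebra_simps)
      qed
      then have "ln (norm (z n) powr l') \<le> ln (norm (w n))"
        unfolding W_def Z_def by (simp add: ln_powr)
      then show ?thesis using f by (subst (asm) ln_le_cancel_iff) auto
    qed
    have "norm (q (z n) (w n)) \<le> norm (w n) powr (real \<delta> + \<kappa>) * (\<Sigma> / \<sigma> powr (real \<delta> + \<kappa>))"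
      unfolding \<Sigma>_def
      by (rule qbound2[OF hs sm t0 t1 l'pos \<kappa> _ \<mu>_def \<sigma>_def])
         (use cond f zw in auto)
    also have "\<dots> \<le> norm (w n) powr (real \<delta> + \<kappa>) * C2" unfolding C2_def by (intro mult_left_mono) auto
    finally have qb: "norm (w (Suc n)) \<le> C2 * norm (w n) powr (real \<delta> + \<kappa>)" using wS by (simp add: mult.commute)
    have "ln (norm (w (Suc n))) \<le> ln (C2 * norm (w n) powr (real \<delta> + \<kappa>))"
      using qb f f1 C2 by (subst ln_le_cancel_iff) auto
    also have "\<dots> = c2 + (real \<delta> + \<kappa>) * ln (norm (w n))"
      unfolding c2_def using C2 f by (simp add: ln_mult ln_powr)
    finally have "(real \<delta> + \<kappa>) * W n - c2 \<le> W (Suc n)" unfolding W_def by (simp add: algebra_simps)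
    moreover have "c2 \<le> \<kappa> / 2 * W n"
    proof -
      have "2 * c2 / \<kappa> * (\<kappa> / 2) \<le> W n * (\<kappa> / 2)" using f(5) \<kappa> by (intro mult_right_mono) auto
      then show ?thesis using \<kappa> by (simp add: mult.commute)
    qed
    ultimately show ?thesis by (simp add: algebra_simps)
  qed
  show False
    by (rule growth_contra[where d = "real \<delta>" and \<kappa> = "\<kappa> / 2" and c = c and N = N and Z = Z and W = W and L = "l + c0"])
       (use delta \<kappa> c Zge Wpos Wg Zg up in auto)
qed



lemma funpow_shift: "(f ^^ (m + n)) x = (f ^^ m) ((f ^^ n) x)"
  by (simp add: funpow_add)

lemma p_iter0:
  fixes p :: "complex \<Rightarrow> complex"
  assumes "p 0 = 0"
  shows "(p ^^ k) 0 = 0"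
  using assms by (induction k) simp_all

lemma set_eq:
  fixes p :: "complex \<Rightarrow> complex" and q :: "complex \<Rightarrow> complex \<Rightarrow> complex"
  assumes p0: "p 0 = 0"
    and U1: "\<forall>x\<in>U. x \<in> basin (skew p q) Dom (0, 0) \<and> (\<forall>n. fst ((skew p q ^^ n) x) \<noteq> 0)"
    and U3: "\<And>x. x \<in> basin (skew p q) Dom (0, 0) \<Longrightarrow> \<forall>n. fst ((skew p q ^^ n) x) \<noteq> 0
               \<Longrightarrow> \<exists>n. (skew p q ^^ n) x \<in> U"
  shows "backward_orbit (skew p q) Dom U
       = basin (skew p q) Dom (0, 0) - backward_orbit (skew p q) Dom {x \<in> Dom. fst x = 0}"
proof
  let ?F = "skew p q"
  show "backward_orbit ?F Dom U \<subseteq> basin ?F Dom (0, 0) - backward_orbit ?F Dom {x \<in> Dom. fst x = 0}"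
  proof
    fix x assume "x \<in> backward_orbit ?F Dom U"
    then obtain n where pre: "\<And>k. k < n \<Longrightarrow> (?F ^^ k) x \<in> Dom" and yU: "(?F ^^ n) x \<in> U"
      unfolding backward_orbit_def preimage_iter_def by blast
    define y where "y = (?F ^^ n) x"
    have yb: "y \<in> basin ?F Dom (0, 0)" and ynz: "\<And>m. fst ((?F ^^ m) y) \<noteq> 0"
      using U1 yU unfolding y_def by auto
    have sh: "(?F ^^ (m + n)) x = (?F ^^ m) y" for m unfolding y_def by (rule funpow_shift)
    have inDom: "(?F ^^ m) x \<in> Dom" for m
    proof (cases "m < n")
      case True then show ?thesis by (rule pre)
    next
      case False
      then have "m = (m - n) + n" by simp
      then have "(?F ^^ m) x = (?F ^^ (m - n)) y" using sh by metis
      then show ?thesis using yb unfolding basin_def by simp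
    qed
    have "(\<lambda>m. (?F ^^ m) y) \<longlonglongrightarrow> (0, 0)" using yb unfolding basin_def by simp
    then have "(\<lambda>m. (?F ^^ (m + n)) x) \<longlonglongrightarrow> (0, 0)" using sh by simp
    then have "(\<lambda>m. (?F ^^ m) x) \<longlonglongrightarrow> (0, 0)" by (rule LIMSEQ_offset)
    then have xb: "x \<in> basin ?F Dom (0, 0)" using inDom unfolding basin_def by simp
    have "x \<notin> backward_orbit ?F Dom {x \<in> Dom. fst x = 0}"
    proof
      assume "x \<in> backward_orbit ?F Dom {x \<in> Dom. fst x = 0}"
      then obtain m where m0: "fst ((?F ^^ m) x) = 0"
        unfolding backward_orbit_def preimage_iter_def by blast
      show False
      proof (cases "m < n")
        case True
        then have "n = (n - m) + m" by simp
        then have "(?F ^^ n) x = (?F ^^ (n - m)) ((?F ^^ m) x)" by (metis funpow_shift)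
        then have "fst y = (p ^^ (n - m)) (fst ((?F ^^ m) x))" unfolding y_def by (simp add: skew_iter_fst)
        then have "fst y = 0" using m0 p_iter0[of p, OF p0] by simp
        then show False using ynz[of 0] by simp
      next
        case False
        then have "m = (m - n) + n" by simp
        then have "(?F ^^ m) x = (?F ^^ (m - n)) y" using sh by metis
        then show False using m0 ynz by metis
      qed
    qed
    then show "x \<in> basin ?F Dom (0, 0) - backward_orbit ?F Dom {x \<in> Dom. fst x = 0}" using xb by simp
  qed
next
  let ?F = "skew p q"
  show "basin ?F Dom (0, 0) - backward_orbit ?F Dom {x \<in> Dom. fst x = 0} \<subseteq> backward_orbit ?F Dom U"
  proof
    fix x assume x: "x \<in> basin ?F Dom (0, 0) - backward_orbit ?F Dom {x \<in> Dom. fst x = 0}"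
    then have xb: "x \<in> basin ?F Dom (0, 0)" by simp
    then have inD: "\<And>k. (?F ^^ k) x \<in> Dom" unfolding basin_def by simp
    have nz: "\<forall>n. fst ((?F ^^ n) x) \<noteq> 0"
    proof (intro allI notI)
      fix n assume "fst ((?F ^^ n) x) = 0"
      then have "x \<in> preimage_iter ?F Dom n {x \<in> Dom. fst x = 0}"
        unfolding preimage_iter_def using inD by simp
      then show False using x unfolding backward_orbit_def by blast
    qed
    obtain n where "(?F ^^ n) x \<in> U" using U3[OF xb nz] by blast
    then have "x \<in> preimage_iter ?F Dom n U" unfolding preimage_iter_def using inD by simp
    then show "x \<in> backward_orbit ?F Dom U" unfolding backward_orbit_def by blast
  qed
qed

theorem theorem2p3:
  fixes p :: "complex \<Rightarrow> complex" and q :: "complex \<Rightarrow> complex \<Rightarrow> complex"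
    and b :: "nat \<Rightarrow> nat \<Rightarrow> complex" and D :: "complex set"
    and a :: complex and \<delta> :: nat
    and n1 m1 ns1 ms1 ns ms :: real
  assumes dom: "D = UNIV \<or> (\<exists>R>0. D = ball 0 R \<and> compact (closure (basin p D 0))
                         \<and> closure (basin p D 0) \<subseteq> ball 0 R)"
    and p_holo: "p holomorphic_on D"
    and a_nz: "a \<noteq> 0" and delta: "\<delta> \<ge> 2"
    and p_expand: "(\<lambda>z. p z - a * z ^ \<delta>) \<in> O[at 0](\<lambda>z. z ^ (\<delta> + 1))"
    and q_series: "\<forall>z\<in>D. \<forall>w. ((\<lambda>(i, j). b i j * z ^ i * w ^ j) has_sum q z w) UNIV"
    and b00: "b 0 0 = 0" and b01: "b 0 1 = 0"
    and v1: "(n1, m1) \<in> newton_vertices b"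
    and vs1: "(ns1, ms1) \<in> newton_vertices b"
    and vs: "(ns, ms) \<in> newton_vertices b"
    and two: "ns1 < ns"
    and first: "\<forall>v\<in>newton_vertices b. n1 \<le> fst v"
    and last: "\<forall>v\<in>newton_vertices b. fst v \<le> ns"
    and second_last: "\<forall>v\<in>newton_vertices b - {(ns, ms)}. fst v \<le> ns1"
    and case2: "real \<delta> \<le> ms1 + ns1 * (ms1 - ms) / (ns - ns1)"
  shows "\<exists>r0>0. \<forall>r. 0 < r \<and> r < r0 \<longrightarrow>
     (real \<delta> \<le> ms \<longrightarrow>
        (\<forall>l>0. backward_orbit (skew p q) (D \<times> UNIV) (Uset r l)
               = basin (skew p q) (D \<times> UNIV) (0, 0)
                 - backward_orbit (skew p q) (D \<times> UNIV) {x \<in> D \<times> UNIV. fst x = 0})) \<and>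
     (ms < real \<delta> \<and> (n1, m1) \<noteq> (0, real \<delta>) \<longrightarrow>
        (\<forall>l. 0 < l \<and> l < ns / (real \<delta> - ms) \<longrightarrow>
            backward_orbit (skew p q) (D \<times> UNIV) (Uset r l)
               = basin (skew p q) (D \<times> UNIV) (0, 0)
                 - backward_orbit (skew p q) (D \<times> UNIV) {x \<in> D \<times> UNIV. fst x = 0}))"
proof -
  let ?F = "skew p q"
  have Dopen: "open D" and D0: "0 \<in> D" using dom by auto
  obtain \<tau> :: real where \<tau>: "0 < \<tau>" "\<tau> \<le> 1 / 2" and \<tau>D: "\<And>z. norm z \<le> \<tau> \<Longrightarrow> z \<in> D"
  proof (cases "D = UNIV")
    case True
    show ?thesis by (rule that[of "1 / 2"]) (use True in auto)
  next
    case False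
    then obtain R where R: "R > 0" "D = ball 0 R" using dom by blast
    show ?thesis
    proof (rule that[of "min (1 / 2) (R / 2)"])
      show "0 < min (1 / 2) (R / 2)" using R by simp
      show "min (1 / 2) (R / 2) \<le> 1 / 2" by simp
      fix z :: complex assume "norm z \<le> min (1 / 2) (R / 2)"
      then have "norm z < R" using R by simp
      then show "z \<in> D" using R by simp
    qed
  qed
  define t where "t = complex_of_real \<tau>"
  have nt: "norm t = \<tau>" unfolding t_def using \<tau> by simp
  have tD: "\<And>z. norm z \<le> norm t \<Longrightarrow> z \<in> D" using \<tau>D nt by simp
  have t0: "0 < norm t" and t1: "norm t < 1" and t1': "norm t \<le> 1" using \<tau> nt by auto
  have d1: "\<delta> \<ge> 1" using delta by simp
  from p_facts[OF Dopen D0 p_holo a_nz d1 p_expand] obtain \<rho>p where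
    p0: "p 0 = 0" and \<rho>p: "\<rho>p > 0"
    and pb: "\<And>z. norm z < \<rho>p \<Longrightarrow> norm a / 2 * norm z ^ \<delta> \<le> norm (p z) \<and> norm (p z) \<le> 2 * norm a * norm z ^ \<delta>"
    by blast
  from newton_facts[OF vs1 vs two last second_last] have
    G1: "\<forall>i j. b i j \<noteq> 0 \<longrightarrow> ms \<le> real j" and Apos: "ms < ms1" and ns1pos: "0 \<le> ns1"
    and G2: "\<forall>i j. b i j \<noteq> 0 \<longrightarrow> (ms1 - ms) * ns + (ns - ns1) * ms \<le> (ms1 - ms) * real i + (ns - ns1) * real j"
    by auto
  from dir1[OF p0 \<rho>p pb a_nz delta tD t0 t1' q_series b00 b01] obtain r0 where
    r0: "r0 > 0" and U1: "\<And>r l. 0 < r \<Longrightarrow> r < r0 \<Longrightarrow> 0 < l \<Longrightarrow>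
           \<forall>x\<in>Uset r l. x \<in> basin ?F (D \<times> UNIV) (0, 0) \<and> (\<forall>n. fst ((?F ^^ n) x) \<noteq> 0)"
    by blast
  have key: "backward_orbit ?F (D \<times> UNIV) (Uset r l)
               = basin ?F (D \<times> UNIV) (0, 0) - backward_orbit ?F (D \<times> UNIV) {x \<in> D \<times> UNIV. fst x = 0}"
    if r: "0 < r" "r < r0" and l: "0 < l" and ll': "l < l'" and \<kappa>: "0 < \<kappa>"
      and cond: "\<forall>i j. b i j \<noteq> 0 \<longrightarrow> \<kappa> * l' \<le> real i + (real j - real \<delta>) * l'" for r l l' \<kappa>
  proof (rule set_eq[OF p0 U1[OF r l]])
    fix x assume xb: "x \<in> basin ?F (D \<times> UNIV) (0, 0)" and nz: "\<forall>n. fst ((?F ^^ n) x) \<noteq> 0"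
    show "\<exists>n. (?F ^^ n) x \<in> Uset r l"
      by (rule dir3[OF \<rho>p pb a_nz delta tD t0 t1 q_series l ll' \<kappa> cond r(1) xb nz])
  qed
  have "\<forall>r. 0 < r \<and> r < r0 \<longrightarrow>
     (real \<delta> \<le> ms \<longrightarrow>
        (\<forall>l>0. backward_orbit ?F (D \<times> UNIV) (Uset r l)
               = basin ?F (D \<times> UNIV) (0, 0) - backward_orbit ?F (D \<times> UNIV) {x \<in> D \<times> UNIV. fst x = 0})) \<and>
     (ms < real \<delta> \<and> (n1, m1) \<noteq> (0, real \<delta>) \<longrightarrow>
        (\<forall>l. 0 < l \<and> l < ns / (real \<delta> - ms) \<longrightarrow>
            backward_orbit ?F (D \<times> UNIV) (Uset r l)
               = basin ?F (D \<times> UNIV) (0, 0) - backward_orbit ?F (D \<times> UNIV) {x \<in> D \<times> UNIV. fst x = 0}))"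
  proof (intro allI impI conjI)
    fix r :: real assume r: "0 < r \<and> r < r0"
    {
      fix l :: real assume dle: "real \<delta> \<le> ms" and l: "0 < l"
      from cond_le[OF G1 G2 Apos ns1pos two dle l] obtain l' \<kappa> where
        "l < l'" "0 < \<kappa>" "\<forall>i j. b i j \<noteq> 0 \<longrightarrow> \<kappa> * l' \<le> real i + (real j - real \<delta>) * l'" by blast
      then show "backward_orbit ?F (D \<times> UNIV) (Uset r l)
               = basin ?F (D \<times> UNIV) (0, 0) - backward_orbit ?F (D \<times> UNIV) {x \<in> D \<times> UNIV. fst x = 0}"
        using key r l by blast
    }
    {
      fix l :: real assume h: "ms < real \<delta> \<and> (n1, m1) \<noteq> (0, real \<delta>)" and l: "0 < l \<and> l < ns / (real \<delta> - ms)"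
      have nb0: "b 0 \<delta> = 0"
      proof (rule ccontr)
        assume "b 0 \<delta> \<noteq> 0"
        from no_0delta[OF G2 Apos ns1pos v1 vs1 vs two first case2 this] h show False by simp
      qed
      from cond_gt[OF G1 G2 Apos ns1pos two case2 _ nb0, of l] h l obtain l' \<kappa> where
        "l < l'" "0 < \<kappa>" "\<forall>i j. b i j \<noteq> 0 \<longrightarrow> \<kappa> * l' \<le> real i + (real j - real \<delta>) * l'" by blast
      then show "backward_orbit ?F (D \<times> UNIV) (Uset r l)
               = basin ?F (D \<times> UNIV) (0, 0) - backward_orbit ?F (D \<times> UNIV) {x \<in> D \<times> UNIV. fst x = 0}"
        using key r l by blast
    }
  qed
  then show ?thesis using r0 by blast
qed

end
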